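(* Let $(X_t)_{t\in\mathbb{Z}}$ satisfy the weak FARIMA$(p,d_0,q)$ equation $a(L)(1-L)^{d_0}X_t=b(L)\epsilon_t$. Then for each $n$ there is a random variable $\Delta_n$, with $(\Delta_n)_{n\ge1}$ bounded in probability, such that for all $i,j\in\{1,\dots,p+q+1\}$ and all $\theta^{(1)},\theta^{(2)}\in\Theta_\kappa$, $$\Big|\frac{\partial^2}{\partial\theta_i\partial\theta_j}Q_n(\theta^{(1)})-\frac{\partial^2}{\partial\theta_i\partial\theta_j}Q_n(\theta^{(2)})\Big|\le\Delta_n\|\theta^{(1)}-\theta^{(2)}\|.$$
   Context: Model: $L$ is the backshift operator, $d_0\in(0,1/2)$, $(\epsilon_t)_{t\in\mathbb Z}$ is a sequence of uncorrelated random variables with mean $0$ and common variance $\sigma_\epsilon^2>0$, $(X_t)$ is second-order stationary, $a(L)=1-\sum_{i=1}^p a_iL^i$, $b(L)=1-\sum_{i=1}^q b_iL^i$ have all roots outside the closed unit disk and no common root; $(1-L)^{d}=\sum_{j\ge0}\alpha_j(d)L^j$ with $\alpha_j(d)=\Gamma(j-d)/\{\Gamma(j+1)\Gamma(-d)\}$. For $\theta=(\theta_1,\dots,\theta_{p+q},d)$: $a_\theta(z)=1-\sum_{i=1}^p\theta_iz^i$, $b_\theta(z)=1-\sum_{j=1}^q\theta_{p+j}z^j$. For $\kappa>0$, $\Theta^*_\kappa$ is the set of $(\theta_1,\dots,\theta_{p+q})$ such that all roots of $a_\theta,b_\theta$ have modulus $\ge1+\kappa$; $\Theta_\kappa=\Theta^*_\kappa\times[d_1,d_2]$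 with $[d_1,d_2]\subset(0,1/2)$. $(\gamma_i(\theta))_{i\ge0}$ are the power-series coefficients of $b_\theta^{-1}(z)a_\theta(z)(1-z)^d$; truncated residuals $\tilde\epsilon_t(\theta)=\sum_{i=0}^{t-1}\gamma_i(\theta)X_{t-i}$ for $1\le t\le n$; $Q_n(\theta)=\frac1n\sum_{t=1}^n\tilde\epsilon_t^2(\theta)$. *)

theory Defs
  imports "HOL-Probability.Probability" "HOL-Computational_Algebra.Formal_Power_Series"
begin

text \<open>Coefficients of the fractional difference operator (1-L)^d.\<close>
definition frac_alpha :: "nat \<Rightarrow> real \<Rightarrow> real" where
  "frac_alpha j d = Gamma (real j - d) / (Gamma (real j + 1) * Gamma (- d))"

definition lag_poly :: "nat \<Rightarrow> (nat \<Rightarrow> real) \<Rightarrow> complex \<Rightarrow> complex" where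
  "lag_poly p c z = 1 - (\<Sum>i=1..p. complex_of_real (c i) * z ^ i)"

text \<open>Parameters theta are functions nat => real; theta_1..theta_p are the AR
  coefficients, theta_{p+1}..theta_{p+q} the MA coefficients, theta_{p+q+1} = d.\<close>
definition a_theta_fps :: "nat \<Rightarrow> (nat \<Rightarrow> real) \<Rightarrow> real fps" where
  "a_theta_fps p \<theta> = Abs_fps (\<lambda>i. if i = 0 then 1 else if i \<le> p then - \<theta> i else 0)"

definition b_theta_fps :: "nat \<Rightarrow> nat \<Rightarrow> (nat \<Rightarrow> real) \<Rightarrow> real fps" where
  "b_theta_fps p q \<theta> = Abs_fps (\<lambda>j. if j = 0 then 1 else if j \<le> q then - \<theta> (p + j) else 0)"

definition frac_fps :: "real \<Rightarrow> real fps" where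
  "frac_fps d = Abs_fps (\<lambda>j. frac_alpha j d)"

definition gamma_coef :: "nat \<Rightarrow> nat \<Rightarrow> (nat \<Rightarrow> real) \<Rightarrow> nat \<Rightarrow> real" where
  "gamma_coef p q \<theta> i =
     fps_nth (inverse (b_theta_fps p q \<theta>) * a_theta_fps p \<theta> * frac_fps (\<theta> (p + q + 1))) i"

definition eps_tilde :: "nat \<Rightarrow> nat \<Rightarrow> (int \<Rightarrow> 'a \<Rightarrow> real) \<Rightarrow> (nat \<Rightarrow> real) \<Rightarrow> nat \<Rightarrow> 'a \<Rightarrow> real" where
  "eps_tilde p q X \<theta> t \<omega> = (\<Sum>i=0..<t. gamma_coef p q \<theta> i * X (int t - int i) \<omega>)"

definition Q_n :: "nat \<Rightarrow> nat \<Rightarrow> (int \<Rightarrow> 'a \<Rightarrow> real) \<Rightarrow> nat \<Rightarrow> (nat \<Rightarrow> real) \<Rightarrow> 'a \<Rightarrow> real" where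
  "Q_n p q X n \<theta> \<omega> = (1 / real n) * (\<Sum>t=1..n. (eps_tilde p q X \<theta> t \<omega>)\<^sup>2)"

text \<open>The parameter set Theta_kappa, as a subset of R^{p+q+1} (coordinates 1..p+q+1;
  the unused coordinates are set to 0).\<close>
definition Theta_kappa :: "nat \<Rightarrow> nat \<Rightarrow> real \<Rightarrow> real \<Rightarrow> real \<Rightarrow> (nat \<Rightarrow> real) set" where
  "Theta_kappa p q \<kappa> d1 d2 =
     {\<theta>. (\<forall>i. i \<notin> {1..p+q+1} \<longrightarrow> \<theta> i = 0)
         \<and> (\<forall>z. lag_poly p \<theta> z = 0 \<longrightarrow> cmod z \<ge> 1 + \<kappa>)
         \<and> (\<forall>z. lag_poly q (\<lambda>j. \<theta> (p + j)) z = 0 \<longrightarrow> cmod z \<ge> 1 + \<kappa>)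
         \<and> \<theta> (p + q + 1) \<in> {d1..d2}}"

definition partial :: "nat \<Rightarrow> ((nat \<Rightarrow> real) \<Rightarrow> real) \<Rightarrow> (nat \<Rightarrow> real) \<Rightarrow> real" where
  "partial i f \<theta> = deriv (\<lambda>h. f (\<theta>(i := h))) (\<theta> i)"

definition param_norm :: "nat \<Rightarrow> (nat \<Rightarrow> real) \<Rightarrow> real" where
  "param_norm m \<theta> = sqrt (\<Sum>i=1..m. (\<theta> i)\<^sup>2)"

definition bounded_in_probability :: "'a measure \<Rightarrow> (nat \<Rightarrow> 'a \<Rightarrow> real) \<Rightarrow> bool" where
  "bounded_in_probability M Y \<longleftrightarrow>
     (\<forall>e>0. \<exists>K. \<forall>n\<ge>1. measure M {\<omega>\<in>space M. \<bar>Y n \<omega>\<bar> > K} < e)"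

definition frac_diff :: "real \<Rightarrow> (int \<Rightarrow> 'a \<Rightarrow> real) \<Rightarrow> int \<Rightarrow> 'a \<Rightarrow> real" where
  "frac_diff d X t \<omega> = (\<Sum>j. frac_alpha j d * X (t - int j) \<omega>)"

end

theory Submission
  imports Defs "HOL-Complex_Analysis.Complex_Analysis" "HOL-Computational_Algebra.Polynomial_FPS"
    "HOL-Computational_Algebra.Fundamental_Theorem_Algebra" "HOL-Analysis.Harmonic_Numbers"
begin

no_notation vec_nth (infixl \<open>$\<close> 90)

lemma fps_mult_majorant:
  fixes f g :: "'a::real_normed_div_algebra fps"
  assumes "\<And>k. norm (f$k) \<le> U k" "\<And>k. norm (g$k) \<le> V k"
  shows "norm ((f*g)$n) \<le> (Abs_fps U * Abs_fps V)$n"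
proof -
  have "norm ((f*g)$n) \<le> (\<Sum>i=0..n. norm (f$i * g$(n-i)))" unfolding fps_mult_nth by (rule norm_sum)
  also have "\<dots> \<le> (\<Sum>i=0..n. U i * V (n-i))"
    by (intro sum_mono) (simp add: norm_mult mult_mono' assms)
  finally show ?thesis by (simp add: fps_mult_nth)
qed

definition SW :: "(nat \<Rightarrow> real) \<Rightarrow> bool" where
  "SW U \<longleftrightarrow> (\<forall>n. 0 \<le> U n) \<and> summable U"

lemma SW_conv:
  assumes "SW U" "SW V"
  shows "SW (\<lambda>n. (Abs_fps U * Abs_fps V)$n)"
proof -
  have "(\<lambda>k. \<Sum>i\<le>k. U i * V (k - i)) sums ((\<Sum>k. U k) * (\<Sum>k. V k))"
    using assms by (intro Cauchy_product_sums) (auto simp: SW_def)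
  hence "summable (\<lambda>k. \<Sum>i\<le>k. U i * V (k - i))" by (rule sums_summable)
  moreover have "(\<lambda>k. \<Sum>i\<le>k. U i * V (k - i)) = (\<lambda>n. (Abs_fps U * Abs_fps V)$n)"
    by (auto simp: fps_mult_nth atLeast0AtMost)
  ultimately show ?thesis using assms
    by (auto simp: SW_def fps_mult_nth intro!: sum_nonneg mult_nonneg_nonneg)
qed

lemma SW_add: "SW U \<Longrightarrow> SW V \<Longrightarrow> SW (\<lambda>n. U n + V n)"
  by (auto simp: SW_def intro: summable_add add_nonneg_nonneg)

lemma SW_scale: "SW U \<Longrightarrow> c \<ge> 0 \<Longrightarrow> SW (\<lambda>n. c * U n)"
  by (auto simp: SW_def intro: summable_mult)

lemma SW_finite: "(\<And>n. n > K \<Longrightarrow> U n = 0) \<Longrightarrow> (\<And>n. 0 \<le> U n) \<Longrightarrow> SW U"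
  unfolding SW_def by (auto intro!: summable_finite[of "{..K}"] simp: not_le[symmetric])

lemma SW_sum: "finite I \<Longrightarrow> (\<And>i. i \<in> I \<Longrightarrow> SW (U i)) \<Longrightarrow> SW (\<lambda>n. \<Sum>i\<in>I. U i n)"
  by (induction I rule: finite_induct) (auto simp: SW_def intro!: summable_add add_nonneg_nonneg sum_nonneg)


definition \<alpha>p :: "nat \<Rightarrow> real poly" where
  "\<alpha>p m = smult (1 / fact m) (\<Prod>k<m. [:of_nat k, -1:])"

definition \<alpha>c :: "nat \<Rightarrow> complex poly" where
  "\<alpha>c m = map_poly of_real (\<alpha>p m)"

lemma frac_alpha_poly:
  assumes "0 < d" "d < 1"
  shows "frac_alpha m d = poly (\<alpha>p m) d"
proof -
  have nz: "- d \<notin> \<int>\<^sub>\<le>\<^sub>0"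
  proof
    assume "- d \<in> \<int>\<^sub>\<le>\<^sub>0"
    then obtain k :: int where "-d = of_int k" "k \<le> 0" by (auto elim!: nonpos_Ints_cases)
    moreover have "k \<noteq> 0" using assms \<open>-d = of_int k\<close> by (intro notI) simp
    ultimately have "k \<le> -1" by linarith
    hence "real_of_int k \<le> -1" by (metis of_int_le_iff of_int_minus of_int_1)
    with assms \<open>-d = of_int k\<close> show False by linarith

  qed
  have "poly (\<alpha>p m) d = (\<Prod>k<m. (of_nat k - d)) / fact m"
    by (simp add: \<alpha>p_def poly_prod)
  also have "(\<Prod>k<m. (of_nat k - d)) = pochhammer (-d) m"
    by (simp add: pochhammer_prod atLeast0LessThan)
  also have "\<dots> = Gamma (- d + of_nat m) / Gamma (-d)"
    using nz by (rule pochhammer_Gamma)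
  also have "fact m = Gamma (1 + of_nat m)" by (simp add: Gamma_fact)
  finally show ?thesis
    by (simp add: frac_alpha_def add.commute)
qed

lemma pderiv_map_of_real:
  "pderiv (map_poly of_real p) = (map_poly of_real (pderiv p) :: complex poly)"
  by (intro poly_eqI) (simp add: coeff_pderiv coeff_map_poly)

lemma poly_map_of_real:
  "poly (map_poly of_real p) (of_real x) = (of_real (poly p x) :: complex)"
  by (simp add: poly_altdef degree_map_poly coeff_map_poly)

lemma map_poly_of_real_mult:
  "map_poly (of_real :: real \<Rightarrow> complex) (p * q) = map_poly of_real p * map_poly of_real q"
  by (intro poly_eqI) (simp add: coeff_mult coeff_map_poly of_real_sum)

lemma poly_\<alpha>c: "poly (\<alpha>c m) w = (\<Prod>k<m. (of_nat k - w)) / fact m"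
proof -
  have 1: "map_poly of_real (\<Prod>k<m. [:of_nat k, -1::real:]) = (\<Prod>k<m. [:of_nat k, -1::complex:])"
  proof (induction m)
    case (Suc m)
    have e: "map_poly (of_real :: real \<Rightarrow> complex) [:of_nat m, -1:] = [:of_nat m, -1:]"
      by (simp add: map_poly_pCons)
    show ?case
      by (simp only: prod.lessThan_Suc map_poly_of_real_mult Suc.IH e)
  qed simp
  have "\<alpha>c m = smult (1 / fact m) (\<Prod>k<m. [:of_nat k, -1:])"
    unfolding \<alpha>c_def \<alpha>p_def by (subst map_poly_smult) (simp_all add: 1)
  thus ?thesis by (simp add: poly_prod)
qed

lemma poly_pderiv_\<alpha>c:
  "poly ((pderiv ^^ k) (\<alpha>c m)) (of_real x) = of_real (poly ((pderiv ^^ k) (\<alpha>p m)) x)"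
proof -
  have "(pderiv ^^ k) (\<alpha>c m) = map_poly of_real ((pderiv ^^ k) (\<alpha>p m))"
    by (induction k) (simp_all add: \<alpha>c_def pderiv_map_of_real)
  thus ?thesis by (simp add: poly_map_of_real)
qed

lemma deriv_funpow_poly:
  "(deriv ^^ k) (poly (P :: complex poly)) = poly ((pderiv ^^ k) P)"
proof (induction k)
  case (Suc k)
  show ?case by (simp add: Suc) (intro ext DERIV_imp_deriv poly_DERIV)
qed simp

lemma alpha_c_bound:
  assumes "m \<ge> 1" "0 < \<delta>" "cmod w \<le> 1" "Re w - \<bar>Im w\<bar> \<ge> \<delta>"
  shows "cmod (poly (\<alpha>c m) w) \<le> exp (- \<delta> * harm (m - 1)) / real m"
  using assms(1)
proof (induction m rule: dec_induct)
  case base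
  show ?case using assms by (simp add: poly_\<alpha>c harm_expand)
next
  case (step m)
  have rec: "poly (\<alpha>c (Suc m)) w = poly (\<alpha>c m) w * (of_nat m - w) / of_nat (Suc m)"
    by (simp add: poly_\<alpha>c field_simps)
  have "Re w \<le> 1" using assms(3) abs_Re_le_cmod[of w] by linarith
  have "cmod (of_nat m - w) \<le> \<bar>Re (of_nat m - w)\<bar> + \<bar>Im (of_nat m - w)\<bar>" by (rule cmod_le)
  also have "\<dots> = real m - Re w + \<bar>Im w\<bar>" using \<open>Re w \<le> 1\<close> step(1) by simp
  also have "\<dots> \<le> real m - \<delta>" using assms(4) by linarith
  finally have c1: "cmod (of_nat m - w) \<le> real m - \<delta>" .
  define H where "H = (harm (m - 1) :: real)"
  have hs: "harm m = H + 1 / real m"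
    using step(1) by (cases m) (simp_all add: H_def harm_Suc field_simps)
  have "cmod (poly (\<alpha>c (Suc m)) w) = cmod (poly (\<alpha>c m) w) * cmod (of_nat m - w) / real (Suc m)"
    by (simp only: rec norm_mult norm_divide norm_of_nat)
  also have "\<dots> \<le> exp (- \<delta> * H) / real m * (real m - \<delta>) / real (Suc m)"
  proof -
    have "cmod (poly (\<alpha>c m) w) * cmod (of_nat m - w) \<le> (exp (- \<delta> * H) / real m) * (real m - \<delta>)"
      using step(3) c1 by (intro mult_mono) (auto simp: H_def)
    thus ?thesis by (intro divide_right_mono) auto
  qed
  also have "\<dots> \<le> exp (- \<delta> * H) * exp (- \<delta> / real m) / real (Suc m)"
  proof -
    have "1 + (- \<delta> / real m) \<le> exp (- \<delta> / real m)" by (rule exp_ge_add_one_self)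
    hence "(real m - \<delta>) / real m \<le> exp (- \<delta> / real m)" using step(1) by (simp add: field_simps)
    hence "exp (- \<delta> * H) * ((real m - \<delta>) / real m) \<le> exp (- \<delta> * H) * exp (- \<delta> / real m)"
      by (intro mult_left_mono) auto
    thus ?thesis by (intro divide_right_mono) (auto simp: field_simps)
  qed
  also have "\<dots> = exp (- \<delta> * harm (Suc m - 1)) / real (Suc m)"
    by (simp add: hs exp_add[symmetric] algebra_simps)
  finally show ?case .
qed

lemma alpha_c_bound2:
  assumes "m \<ge> 1" "0 < \<delta>" "cmod w \<le> 1" "Re w - \<bar>Im w\<bar> \<ge> \<delta>"
  shows "cmod (poly (\<alpha>c m) w) \<le> real m powr (-1 - \<delta>)"
proof -
  have "ln (real (m - 1) + 1) \<le> harm (m - 1)" by (rule ln_le_harm)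
  hence "ln (real m) \<le> harm (m - 1)" using assms(1) by (simp add: of_nat_diff)
  hence "exp (- \<delta> * harm (m - 1)) \<le> exp (- \<delta> * ln (real m))" using assms(2) by simp
  also have "\<dots> = real m powr (- \<delta>)" using assms(1) by (simp add: powr_def)
  finally have "exp (- \<delta> * harm (m - 1)) / real m \<le> real m powr (- \<delta>) / real m"
    by (intro divide_right_mono) auto
  also have "\<dots> = real m powr (-1 - \<delta>)"
    using assms(1) by (simp add: powr_diff powr_minus divide_inverse powr_add)
  finally show ?thesis using alpha_c_bound[OF assms] by linarith
qed

lemma alpha_deriv_bound:
  assumes "m \<ge> 1" "0 < d1" "d1 \<le> x" "x \<le> 1/2"
  shows "\<bar>poly ((pderiv ^^ k) (\<alpha>p m)) x\<bar> \<le> fact k * (2 * real m powr (-1 - d1/2)) / (d1/4) ^ k"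
proof -
  define b where "b = real m powr (-1 - d1/2)"
  have bpos: "b > 0" using assms by (simp add: b_def)
  have bnd: "cmod (poly (\<alpha>c m) w) < 2 * b" if "w \<in> ball (of_real x) (d1/4)" for w
  proof -
    have d: "cmod (w - of_real x) < d1/4" using that by (simp add: dist_norm norm_minus_commute)
    have "\<bar>Re (w - of_real x)\<bar> \<le> cmod (w - of_real x)" by (rule abs_Re_le_cmod)
    hence r: "\<bar>Re w - x\<bar> < d1/4" using d by simp
    have "\<bar>Im (w - of_real x)\<bar> \<le> cmod (w - of_real x)" by (rule abs_Im_le_cmod)
    hence i: "\<bar>Im w\<bar> < d1/4" using d by simp
    have "cmod w \<le> cmod (of_real x) + cmod (w - of_real x)" by (metis norm_triangle_sub add.commute)
    hence "cmod w \<le> 1" using d assms by simp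
    moreover have "Re w - \<bar>Im w\<bar> \<ge> d1/2" using r i assms by linarith
    ultimately have "cmod (poly (\<alpha>c m) w) \<le> b"
      unfolding b_def using assms by (intro alpha_c_bound2) auto
    thus ?thesis using bpos by linarith
  qed
  have eq: "\<bar>poly ((pderiv ^^ k) (\<alpha>p m)) x\<bar> = cmod ((deriv ^^ k) (poly (\<alpha>c m)) (of_real x))"
    by (simp add: deriv_funpow_poly poly_pderiv_\<alpha>c)
  show ?thesis
  proof (cases "k = 0")
    case True
    have "x \<in> ball x (d1/4)" using assms by simp
    from bnd[of "of_real x"] assms have "cmod (poly (\<alpha>c m) (of_real x)) < 2 * b" by simp
    thus ?thesis using eq True by (simp add: b_def)
  next
    case False
    have "cmod ((deriv ^^ k) (poly (\<alpha>c m)) (of_real x)) \<le> fact k * (2 * b) / (d1/4) ^ k"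
    proof (rule Cauchy_higher_deriv_bound[where y = 0])
      show "poly (\<alpha>c m) holomorphic_on ball (of_real x) (d1 / 4)" by (intro holomorphic_intros)
      show "continuous_on (cball (of_real x) (d1 / 4)) (poly (\<alpha>c m))"
        by (intro continuous_intros)
      show "\<And>w. w \<in> ball (of_real x) (d1 / 4) \<Longrightarrow> poly (\<alpha>c m) w \<in> ball 0 (2 * b)"
        using bnd by simp
    qed (use assms False in auto)
    thus ?thesis using eq by (simp add: b_def)
  qed
qed


definition lagP :: "nat \<Rightarrow> (nat \<Rightarrow> real) \<Rightarrow> complex poly" where
  "lagP n c = 1 - (\<Sum>i=1..n. monom (of_real (c i)) i)"

lemma poly_lagP: "poly (lagP n c) z = lag_poly n c z"
  by (simp add: lagP_def lag_poly_def poly_sum poly_monom)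

lemma coeff_lagP: "coeff (lagP n c) k = (if k = 0 then 1 else if k \<le> n then - of_real (c k) else 0)"
proof -
  have "coeff (\<Sum>i=1..n. monom (complex_of_real (c i)) i) k = (\<Sum>i=1..n. if i = k then of_real (c i) else 0)"
    by (simp add: coeff_sum coeff_monom)
  also have "\<dots> = (if 1 \<le> k \<and> k \<le> n then of_real (c k) else 0)"
    by (subst sum.delta) auto
  finally show ?thesis by (auto simp: lagP_def coeff_diff)
qed

lemma degree_lagP: "degree (lagP n c) \<le> n"
  by (rule degree_le) (simp add: coeff_lagP)

lemma prod_lin_smult:
  assumes "0 \<notin># Z"
  shows "(\<Prod>x\<in>#Z. [:-x, 1:]) = smult (\<Prod>x\<in>#Z. -x) (\<Prod>x\<in>#Z. [:1, - 1/x:] :: complex poly)"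
  using assms
proof (induction Z)
  case (add x Z)
  hence x: "x \<noteq> 0" by auto
  have e: "[:-x, 1:] = smult (-x) [:1, -1/x:]" using x by simp
  have "(\<Prod>y\<in>#add_mset x Z. [:-y, 1:]) = [:-x, 1:] * (\<Prod>y\<in>#Z. [:-y, 1:])"
    by (simp only: image_mset_add_mset prod_mset.add_mset)
  also have "\<dots> = smult (-x) [:1, -1/x:] * smult (\<Prod>y\<in>#Z. -y) (\<Prod>y\<in>#Z. [:1, - 1/y:])"
    using add by (simp only: e) simp
  also have "\<dots> = smult ((-x) * (\<Prod>y\<in>#Z. -y)) ([:1, -1/x:] * (\<Prod>y\<in>#Z. [:1, - 1/y:]))"
    by (simp only: mult_smult_left mult_smult_right smult_smult mult.commute)
  also have "\<dots> = smult (\<Prod>y\<in>#add_mset x Z. -y) (\<Prod>y\<in>#add_mset x Z. [:1, - 1/y:])"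
    by (simp only: image_mset_add_mset prod_mset.add_mset)
  finally show ?case .
qed simp

lemma lagP_factor:
  assumes "\<And>z. poly P z = 0 \<Longrightarrow> cmod z \<ge> R" "R > 0" "coeff P 0 = 1"
  shows "P = (\<Prod>x\<in>#proots P. [:1, - 1/x:])"
proof -
  have P0: "P \<noteq> 0" using assms(3) by auto
  have z: "0 \<notin># proots P"
  proof
    assume "0 \<in># proots P"
    hence "poly P 0 = 0" using P0 by simp
    thus False using assms(3) by (simp add: poly_0_coeff_0)
  qed
  define Q where "Q = (\<Prod>x\<in>#proots P. [:1, - 1/x:])"
  have "P = smult (lead_coeff P) (\<Prod>x\<in>#proots P. [:-x, 1:])"
    by (rule complex_poly_decompose_multiset[symmetric])
  also have "\<dots> = smult (lead_coeff P * (\<Prod>x\<in>#proots P. -x)) Q"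
    by (simp add: prod_lin_smult[OF z] Q_def)
  finally have PQ: "P = smult (lead_coeff P * (\<Prod>x\<in>#proots P. -x)) Q" .
  have "coeff Q 0 = 1" by (simp add: Q_def poly_0_coeff_0[symmetric] poly_prod_mset)
  hence "lead_coeff P * (\<Prod>x\<in>#proots P. -x) = 1"
    using arg_cong[OF PQ, of "\<lambda>p. coeff p 0"] assms(3) by simp
  with PQ show ?thesis by (simp add: Q_def)
qed

lemma coeff_prod_bound:
  assumes "\<And>x. x \<in># Z \<Longrightarrow> cmod x \<ge> 1"
  shows "cmod (coeff (\<Prod>x\<in>#Z. [:1, - 1/x:]) k) \<le> 2 ^ size Z"
  using assms
proof (induction Z arbitrary: k)
  case empty
  then show ?case by (cases k) auto
next
  case (add x Z)
  define Q where "Q = (\<Prod>x\<in>#Z. [:1, - 1/x:])"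
  have IH: "\<And>k. cmod (coeff Q k) \<le> 2 ^ size Z" using add by (auto simp: Q_def)
  have cx: "cmod (- 1/x) \<le> 1" using add.prems[of x]
    by (simp add: norm_divide divide_le_eq_1)
  have "[:1, - 1/x:] * Q = Q + pCons 0 (smult (- 1/x) Q)"
    by (simp add: mult_pCons_left)
  hence "coeff ([:1, - 1/x:] * Q) k = coeff Q k + (if k = 0 then 0 else (- 1/x) * coeff Q (k - 1))"
    by (cases k) auto
  also have "cmod \<dots> \<le> 2 ^ size Z + 2 ^ size Z"
  proof -
    define e where "e = (if k = 0 then 0 else (- 1/x) * coeff Q (k - 1))"
    have "cmod ((- 1/x) * coeff Q (k - 1)) \<le> 1 * 2 ^ size Z"
      unfolding norm_mult by (intro mult_mono cx IH) auto
    hence "cmod e \<le> 2 ^ size Z" by (auto simp: e_def)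
    moreover have "cmod (coeff Q k + e) \<le> cmod (coeff Q k) + cmod e" by (rule norm_triangle_ineq)
    ultimately have "cmod (coeff Q k + e) \<le> 2 ^ size Z + 2 ^ size Z" using IH[of k] by linarith
    thus ?thesis by (simp only: e_def)
  qed
  finally show ?case by (simp add: Q_def)
qed

lemma lag_coeff_bound:
  assumes "\<And>z. lag_poly n c z = 0 \<Longrightarrow> cmod z \<ge> 1 + \<kappa>" "\<kappa> > 0" "1 \<le> k" "k \<le> n"
  shows "\<bar>c k\<bar> \<le> 2 ^ n"
proof -
  define P where "P = lagP n c"
  have c0: "coeff P 0 = 1" by (simp add: P_def coeff_lagP)
  have r: "\<And>z. poly P z = 0 \<Longrightarrow> cmod z \<ge> 1 + \<kappa>" using assms by (simp add: P_def poly_lagP)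
  have fac: "P = (\<Prod>x\<in>#proots P. [:1, - 1/x:])"
    using r assms(2) c0 by (intro lagP_factor[where R = "1+\<kappa>"]) auto
  have "cmod (coeff P k) \<le> 2 ^ size (proots P)"
  proof (subst fac, rule coeff_prod_bound)
    fix x assume "x \<in># proots P"
    hence "poly P x = 0" using c0 by (cases "P = 0") auto
    thus "1 \<le> cmod x" using r[of x] assms(2) by simp
  qed
  also have "size (proots P) \<le> n" using size_proots_le[of P] degree_lagP[of n c] by (simp add: P_def)
  hence "(2::real) ^ size (proots P) \<le> 2 ^ n" by (intro power_increasing) auto
  finally show ?thesis using assms by (simp add: P_def coeff_lagP)
qed


definition cpx :: "real fps \<Rightarrow> complex fps" where
  "cpx f = Abs_fps (\<lambda>n. of_real (f $ n))"

lemma cpx_nth [simp]: "cpx f $ n = of_real (f $ n)" by (simp add: cpx_def)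

lemma cpx_mult: "cpx (f * g) = cpx f * cpx g"
  by (rule fps_ext) (simp add: fps_mult_nth of_real_sum)

lemma cpx_one: "cpx 1 = 1"
  by (rule fps_ext) simp

lemma cpx_inverse: assumes "f $ 0 \<noteq> 0" shows "cpx (inverse f) = inverse (cpx f)"
proof -
  have "cpx f * cpx (inverse f) = 1"
    using assms by (simp add: cpx_mult[symmetric] cpx_one inverse_mult_eq_1')
  thus ?thesis by (rule fps_inverse_unique[symmetric])
qed

lemma fps_of_poly_prod_mset: "fps_of_poly (prod_mset (image_mset f Z)) = prod_mset (image_mset (\<lambda>x. fps_of_poly (f x)) Z)"
  by (induction Z) (simp_all add: fps_of_poly_mult)

lemma inverse_prod_mset: "inverse (prod_mset (image_mset f Z) :: complex fps) = prod_mset (image_mset (\<lambda>x. inverse (f x)) Z)"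
  by (induction Z) (simp_all add: fps_inverse_mult)

lemma inverse_lin: "inverse (1 + fps_const (a::complex) * fps_X) = Abs_fps (\<lambda>n. (-a) ^ n)"
proof (rule fps_inverse_unique, rule fps_ext)
  fix n
  have e: "(1 + fps_const a * fps_X) * Abs_fps (\<lambda>n. (-a) ^ n) = Abs_fps (\<lambda>n. (-a) ^ n) + fps_const a * (fps_X * Abs_fps (\<lambda>n. (-a) ^ n))"
    by (simp add: algebra_simps)
  show "((1 + fps_const a * fps_X) * Abs_fps (\<lambda>n. (-a) ^ n)) $ n = (1::complex fps) $ n"
    unfolding e by (cases n) auto
qed

definition geoG :: "real \<Rightarrow> real fps" where "geoG \<rho> = Abs_fps (\<lambda>n. \<rho> ^ n)"

lemma geoG_pow_nonneg: "0 \<le> \<rho> \<Longrightarrow> 0 \<le> (geoG \<rho> ^ k) $ n"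
proof (induction k arbitrary: n)
  case 0 then show ?case by (simp add: fps_one_nth)
next
  case (Suc k) then show ?case
    by (auto simp: fps_mult_nth geoG_def intro!: sum_nonneg mult_nonneg_nonneg)
qed

lemma geoG_pow_0: "(geoG \<rho> ^ k) $ 0 = 1"
  by (induction k) (simp_all add: geoG_def)

lemma coeff_mono_mult:
  fixes F H :: "real fps"
  assumes "\<And>k. 0 \<le> F $ k" "\<And>k. 0 \<le> H $ k" "H $ 0 = 1"
  shows "F $ n \<le> (F * H) $ n"
proof -
  have "F $ n = F $ n * H $ (n - n)" using assms by simp
  also have "\<dots> \<le> (\<Sum>i=0..n. F $ i * H $ (n - i))"
    by (rule member_le_sum) (use assms in \<open>auto intro!: mult_nonneg_nonneg\<close>)
  finally show ?thesis by (simp add: fps_mult_nth)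
qed

lemma geoG_pow_mono: "0 \<le> \<rho> \<Longrightarrow> s \<le> q \<Longrightarrow> (geoG \<rho> ^ s) $ n \<le> (geoG \<rho> ^ q) $ n"
proof -
  assume a: "0 \<le> \<rho>" "s \<le> q"
  have "geoG \<rho> ^ q = geoG \<rho> ^ s * geoG \<rho> ^ (q - s)" using a by (simp add: power_add[symmetric])
  thus ?thesis using a by (simp add: coeff_mono_mult geoG_pow_nonneg geoG_pow_0)
qed

lemma SW_geoG_pow: "0 \<le> \<rho> \<Longrightarrow> \<rho> < 1 \<Longrightarrow> SW (\<lambda>n. (geoG \<rho> ^ k) $ n)"
proof (induction k)
  case 0
  show ?case by (rule SW_finite[of 0]) (auto simp: fps_one_nth)
next
  case (Suc k)
  have "SW (\<lambda>n. \<rho> ^ n)" using Suc.prems by (auto simp: SW_def intro: summable_geometric)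
  hence "SW (\<lambda>n. (Abs_fps (\<lambda>n. \<rho> ^ n) * Abs_fps (\<lambda>n. (geoG \<rho> ^ k) $ n)) $ n)"
    using Suc by (intro SW_conv) auto
  thus ?case by (simp add: geoG_def fps_nth_inverse)
qed

lemma inv_prod_majorant:
  assumes "\<And>x. x \<in># Z \<Longrightarrow> cmod (1/x) \<le> \<rho>" "0 \<le> \<rho>"
  shows "cmod (inverse (\<Prod>x\<in>#Z. fps_of_poly [:1, - 1/x:]) $ n) \<le> (geoG \<rho> ^ size Z) $ n"
  using assms(1)
proof (induction Z arbitrary: n)
  case empty then show ?case by (simp add: fps_one_nth)
next
  case (add x Z)
  have i: "inverse (fps_of_poly [:1, - 1/x:]) = Abs_fps (\<lambda>n. (1/x) ^ n)"
    by (simp add: fps_of_poly_linear' inverse_lin)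
  have b1: "cmod (Abs_fps (\<lambda>n. (1/x) ^ n) $ k) \<le> \<rho> ^ k" for k
    using add.prems[of x] by (simp add: norm_power power_mono)
  have "inverse (\<Prod>y\<in>#add_mset x Z. fps_of_poly [:1, - 1/y:]) =
        Abs_fps (\<lambda>n. (1/x) ^ n) * inverse (\<Prod>y\<in>#Z. fps_of_poly [:1, - 1/y:])"
    by (simp only: prod_mset.add_mset image_mset_add_mset fps_inverse_mult i)
  hence "cmod (inverse (\<Prod>y\<in>#add_mset x Z. fps_of_poly [:1, - 1/y:]) $ n) \<le>
      (Abs_fps (\<lambda>n. \<rho> ^ n) * Abs_fps (\<lambda>n. (geoG \<rho> ^ size Z) $ n)) $ n"
    using add b1 by (simp only:) (rule fps_mult_majorant, auto)
  thus ?case by (simp add: geoG_def fps_nth_inverse)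
qed

lemma inv_lag_bound:
  fixes c :: "nat \<Rightarrow> real"
  assumes "\<And>z. lag_poly n c z = 0 \<Longrightarrow> cmod z \<ge> 1 + \<kappa>" "\<kappa> > 0"
  shows "\<bar>inverse (Abs_fps (\<lambda>j. if j = 0 then 1 else if j \<le> n then - c j else 0)) $ k\<bar>
         \<le> (geoG (1/(1+\<kappa>)) ^ n) $ k"
proof -
  define P where "P = lagP n c"
  define B where "B = Abs_fps (\<lambda>j. if j = 0 then 1 else if j \<le> n then - c j else 0)"
  have c0: "coeff P 0 = 1" by (simp add: P_def coeff_lagP)
  have r: "\<And>z. poly P z = 0 \<Longrightarrow> cmod z \<ge> 1 + \<kappa>" using assms by (simp add: P_def poly_lagP)
  have fac: "P = (\<Prod>x\<in>#proots P. [:1, - 1/x:])"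
    using r assms(2) c0 by (intro lagP_factor[where R = "1+\<kappa>"]) auto
  have cB: "cpx B = fps_of_poly P"
    by (rule fps_ext) (simp add: B_def P_def coeff_lagP)
  have "B $ 0 \<noteq> 0" by (simp add: B_def)
  hence "cpx (inverse B) = inverse (cpx B)" by (rule cpx_inverse)
  also have "\<dots> = inverse (fps_of_poly P)" by (simp only: cB)
  also have "\<dots> = inverse (\<Prod>x\<in>#proots P. fps_of_poly [:1, - 1/x:])"
    by (subst fac) (simp add: fps_of_poly_prod_mset)
  finally have e: "cpx (inverse B) = inverse (\<Prod>x\<in>#proots P. fps_of_poly [:1, - 1/x:])" .
  have "cmod (inverse (\<Prod>x\<in>#proots P. fps_of_poly [:1, - 1/x:]) $ k) \<le> (geoG (1/(1+\<kappa>)) ^ size (proots P)) $ k"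
  proof (rule inv_prod_majorant)
    fix x assume "x \<in># proots P"
    hence "poly P x = 0" using c0 by (cases "P = 0") auto
    hence "cmod x \<ge> 1 + \<kappa>" using r by blast
    thus "cmod (1/x) \<le> 1/(1+\<kappa>)" using assms(2)
      by (simp add: norm_divide divide_le_eq field_simps)
  qed (use assms in auto)
  also have "\<dots> \<le> (geoG (1/(1+\<kappa>)) ^ n) $ k"
    using size_proots_le[of P] degree_lagP[of n c] assms(2)
    by (intro geoG_pow_mono) (auto simp: P_def)
  finally have "cmod (cpx (inverse B) $ k) \<le> (geoG (1/(1+\<kappa>)) ^ n) $ k" by (simp only: e)
  thus ?thesis by (simp add: B_def)
qed


definition hasD :: "nat \<Rightarrow> ((nat \<Rightarrow> real) \<Rightarrow> real fps) \<Rightarrow> ((nat \<Rightarrow> real) \<Rightarrow> real fps) \<Rightarrow> bool" where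
  "hasD i f f' \<longleftrightarrow> (\<forall>\<theta> n. ((\<lambda>h. f (\<theta>(i:=h)) $ n) has_real_derivative f' \<theta> $ n) (at (\<theta> i)))"

lemma hasD_mult:
  assumes "hasD i f f'" "hasD i g g'"
  shows "hasD i (\<lambda>\<theta>. f \<theta> * g \<theta>) (\<lambda>\<theta>. f' \<theta> * g \<theta> + f \<theta> * g' \<theta>)"
  unfolding hasD_def
proof (intro allI)
  fix \<theta> n
  have "((\<lambda>h. \<Sum>k=0..n. f (\<theta>(i:=h)) $ k * g (\<theta>(i:=h)) $ (n - k)) has_real_derivative
        (\<Sum>k=0..n. f (\<theta>(i:=\<theta> i)) $ k * g' \<theta> $ (n - k) + f' \<theta> $ k * g (\<theta>(i:=\<theta> i)) $ (n - k))) (at (\<theta> i))"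
    using assms unfolding hasD_def by (intro DERIV_sum DERIV_mult') auto
  thus "((\<lambda>h. (f (\<theta>(i:=h)) * g (\<theta>(i:=h))) $ n) has_real_derivative
          (f' \<theta> * g \<theta> + f \<theta> * g' \<theta>) $ n) (at (\<theta> i))"
    by (simp add: fps_mult_nth sum.distrib algebra_simps)
qed

lemma hasD_add:
  assumes "hasD i f f'" "hasD i g g'"
  shows "hasD i (\<lambda>\<theta>. f \<theta> + g \<theta>) (\<lambda>\<theta>. f' \<theta> + g' \<theta>)"
  using assms unfolding hasD_def by (auto intro!: DERIV_add)

lemma hasD_const: "hasD i (\<lambda>_. F) (\<lambda>_. 0)"
  unfolding hasD_def by simp

lemma hasD_cong: "hasD i f f' \<Longrightarrow> (\<And>\<theta>. f' \<theta> = f'' \<theta>) \<Longrightarrow> hasD i f f''"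
  unfolding hasD_def by simp

lemma hasD_mult3:
  assumes "hasD i f f'" "hasD i g g'" "hasD i k k'"
  shows "hasD i (\<lambda>\<theta>. f \<theta> * g \<theta> * k \<theta>) (\<lambda>\<theta>. f' \<theta> * g \<theta> * k \<theta> + f \<theta> * g' \<theta> * k \<theta> + f \<theta> * g \<theta> * k' \<theta>)"
  by (rule hasD_cong[OF hasD_mult[OF hasD_mult[OF assms(1,2)] assms(3)]]) (simp add: algebra_simps)

lemma hasD_affine:
  assumes "\<And>\<theta> h. f (\<theta>(i:=h)) = f \<theta> + fps_const (h - \<theta> i) * E"
  shows "hasD i f (\<lambda>_. E)"
  unfolding hasD_def
proof (intro allI)
  fix \<theta> n
  have "((\<lambda>h. f \<theta> $ n + (h - \<theta> i) * E $ n) has_real_derivative E $ n) (at (\<theta> i))"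
    by (auto intro!: derivative_eq_intros)
  thus "((\<lambda>h. f (\<theta>(i:=h)) $ n) has_real_derivative (\<lambda>_. E) \<theta> $ n) (at (\<theta> i))"
    by (simp add: assms)
qed

lemma inverse_coeff_rec:
  fixes f :: "real fps"
  assumes "f $ 0 = 1" "n > 0"
  shows "inverse f $ n = - (\<Sum>i=1..n. f $ i * inverse f $ (n - i))"
proof -
  have "(f * inverse f) $ n = 0" using assms by (simp add: inverse_mult_eq_1')
  hence "(\<Sum>i=0..n. f $ i * inverse f $ (n - i)) = 0" by (simp add: fps_mult_nth)
  also have "(\<Sum>i=0..n. f $ i * inverse f $ (n - i)) = f $ 0 * inverse f $ n + (\<Sum>i=1..n. f $ i * inverse f $ (n - i))"
    using assms(2) by (simp add: sum.atLeast_Suc_atMost)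
  finally show ?thesis using assms(1) by simp
qed

lemma inverse_coeff_cont:
  fixes B :: "real \<Rightarrow> real fps"
  assumes "\<And>k. continuous (at h0) (\<lambda>h. B h $ k)" "\<And>h. B h $ 0 = 1"
  shows "continuous (at h0) (\<lambda>h. inverse (B h) $ n)"
proof (induction n rule: less_induct)
  case (less n)
  show ?case
  proof (cases "n = 0")
    case True then show ?thesis using assms(2) by simp
  next
    case False
    have e: "(\<lambda>h. inverse (B h) $ n) = (\<lambda>h. - (\<Sum>i=1..n. B h $ i * inverse (B h) $ (n - i)))"
      using False assms(2) by (intro ext inverse_coeff_rec) auto
    show ?thesis unfolding e using less assms(1) False
      by (intro continuous_intros) auto
  qed
qed

lemma mult_coeff_cont:
  fixes F G :: "real \<Rightarrow> real fps"
  assumes "\<And>k. continuous (at h0) (\<lambda>h. F h $ k)" "\<And>k. continuous (at h0) (\<lambda>h. G h $ k)"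
  shows "continuous (at h0) (\<lambda>h. (F h * G h) $ n)"
  unfolding fps_mult_nth using assms by (intro continuous_intros)

lemma inverse_deriv:
  fixes B :: "real \<Rightarrow> real fps"
  assumes "\<And>h. B h $ 0 = 1" "\<And>h. B h = B h0 - fps_const (h - h0) * E"
  shows "((\<lambda>h. inverse (B h) $ n) has_real_derivative (E * inverse (B h0) * inverse (B h0)) $ n) (at h0)"
proof -
  have Bc: "continuous (at h0) (\<lambda>h. B h $ k)" for k
  proof -
    have "(\<lambda>h. B h $ k) = (\<lambda>h. B h0 $ k - (h - h0) * E $ k)"
      by (subst assms(2)) simp
    thus ?thesis by (simp add: continuous_intros)
  qed
  have ic: "continuous (at h0) (\<lambda>h. inverse (B h) $ k)" for k
    by (rule inverse_coeff_cont[OF Bc assms(1)])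
  have id: "inverse (B h) - inverse (B h0) = fps_const (h - h0) * (E * inverse (B h) * inverse (B h0))" for h
  proof -
    have "inverse (B h) - inverse (B h0) = inverse (B h) * (B h0 - B h) * inverse (B h0)"
      using assms(1) by (simp add: algebra_simps inverse_mult_eq_1 inverse_mult_eq_1')
    also have "B h0 - B h = fps_const (h - h0) * E" by (subst assms(2)[of h]) simp
    finally show ?thesis by (simp add: mult_ac)
  qed
  have q: "(inverse (B h) $ n - inverse (B h0) $ n) / (h - h0) = (E * inverse (B h) * inverse (B h0)) $ n"
    if "h \<noteq> h0" for h
  proof -
    have "inverse (B h) $ n - inverse (B h0) $ n = (h - h0) * (E * inverse (B h) * inverse (B h0)) $ n"
      using arg_cong[OF id[of h], of "\<lambda>f. f $ n"] by simp
    thus ?thesis using that by simp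
  qed
  have cont: "continuous (at h0) (\<lambda>h. (E * inverse (B h) * inverse (B h0)) $ n)"
    by (intro mult_coeff_cont ic) auto
  hence "((\<lambda>h. (E * inverse (B h) * inverse (B h0)) $ n) \<longlongrightarrow> (E * inverse (B h0) * inverse (B h0)) $ n) (at h0)"
    by (simp add: continuous_at)
  hence "((\<lambda>h. (inverse (B h) $ n - inverse (B h0) $ n) / (h - h0)) \<longlongrightarrow> (E * inverse (B h0) * inverse (B h0)) $ n) (at h0)"
    by (rule Lim_transform_eventually) (auto simp: eventually_at_filter q)
  thus ?thesis by (simp add: has_field_derivative_iff)
qed


definition cF :: "nat \<Rightarrow> nat \<Rightarrow> (nat \<Rightarrow> real) \<Rightarrow> real fps" where
  "cF p q \<theta> = inverse (b_theta_fps p q \<theta>)"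
definition aF :: "nat \<Rightarrow> (nat \<Rightarrow> real) \<Rightarrow> real fps" where
  "aF p \<theta> = a_theta_fps p \<theta>"
definition FF :: "nat \<Rightarrow> nat \<Rightarrow> (nat \<Rightarrow> real) \<Rightarrow> real fps" where
  "FF e k \<theta> = Abs_fps (\<lambda>m. poly ((pderiv ^^ k) (\<alpha>p m)) (\<theta> e))"
definition EE :: "nat \<Rightarrow> nat \<Rightarrow> nat \<Rightarrow> real fps" where
  "EE p q i = (if p < i \<and> i \<le> p + q then fps_X ^ (i - p) else 0)"
definition EA :: "nat \<Rightarrow> nat \<Rightarrow> real fps" where
  "EA p i = (if 1 \<le> i \<and> i \<le> p then fps_X ^ i else 0)"
definition Dc :: "nat \<Rightarrow> nat \<Rightarrow> nat \<Rightarrow> (nat \<Rightarrow> real) \<Rightarrow> real fps" where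
  "Dc p q i \<theta> = EE p q i * cF p q \<theta> * cF p q \<theta>"
definition DF :: "nat \<Rightarrow> nat \<Rightarrow> nat \<Rightarrow> nat \<Rightarrow> (nat \<Rightarrow> real) \<Rightarrow> real fps" where
  "DF p q i k \<theta> = (if i = p + q + 1 then FF (p + q + 1) (Suc k) \<theta> else 0)"

lemma b_upd: "b_theta_fps p q (\<theta>(i:=h)) = b_theta_fps p q \<theta> - fps_const (h - \<theta> i) * EE p q i"
  by (rule fps_ext) (auto simp: b_theta_fps_def EE_def)

lemma a_upd: "a_theta_fps p (\<theta>(i:=h)) = a_theta_fps p \<theta> + fps_const (h - \<theta> i) * (- EA p i)"
  by (rule fps_ext) (auto simp: a_theta_fps_def EA_def)

lemma hasD_cF: "hasD i (cF p q) (Dc p q i)"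
  unfolding hasD_def
proof (intro allI)
  fix \<theta> n
  have "((\<lambda>h. inverse (b_theta_fps p q (\<theta>(i:=h))) $ n) has_real_derivative
     (EE p q i * inverse (b_theta_fps p q (\<theta>(i:=\<theta> i))) * inverse (b_theta_fps p q (\<theta>(i:=\<theta> i)))) $ n) (at (\<theta> i))"
    by (rule inverse_deriv) (simp add: b_theta_fps_def, simp add: b_upd)
  thus "((\<lambda>h. cF p q (\<theta>(i:=h)) $ n) has_real_derivative Dc p q i \<theta> $ n) (at (\<theta> i))"
    by (simp add: cF_def Dc_def)
qed

lemma hasD_aF: "hasD i (aF p) (\<lambda>_. - EA p i)"
  by (rule hasD_affine) (simp add: aF_def a_upd)

lemma hasD_FF: "hasD i (FF e k) (\<lambda>\<theta>. if i = e then FF e (Suc k) \<theta> else 0)"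
  unfolding hasD_def
proof (intro allI)
  fix \<theta> n
  show "((\<lambda>h. FF e k (\<theta>(i:=h)) $ n) has_real_derivative (if i = e then FF e (Suc k) \<theta> else 0) $ n) (at (\<theta> i))"
  proof (cases "i = e")
    case True
    have "((\<lambda>h. poly ((pderiv ^^ k) (\<alpha>p n)) h) has_real_derivative poly (pderiv ((pderiv ^^ k) (\<alpha>p n))) (\<theta> i)) (at (\<theta> i))"
      by (rule poly_DERIV)
    thus ?thesis using True by (simp add: FF_def)
  next
    case False
    thus ?thesis by (simp add: FF_def)
  qed
qed

definition gam :: "nat \<Rightarrow> nat \<Rightarrow> (nat \<Rightarrow> real) \<Rightarrow> real fps" where
  "gam p q \<theta> = cF p q \<theta> * aF p \<theta> * FF (p+q+1) 0 \<theta>"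

definition G1 :: "nat \<Rightarrow> nat \<Rightarrow> nat \<Rightarrow> (nat \<Rightarrow> real) \<Rightarrow> real fps" where
  "G1 p q i \<theta> = Dc p q i \<theta> * aF p \<theta> * FF (p+q+1) 0 \<theta> + cF p q \<theta> * (- EA p i) * FF (p+q+1) 0 \<theta>
      + cF p q \<theta> * aF p \<theta> * DF p q i 0 \<theta>"

definition DDc :: "nat \<Rightarrow> nat \<Rightarrow> nat \<Rightarrow> nat \<Rightarrow> (nat \<Rightarrow> real) \<Rightarrow> real fps" where
  "DDc p q a b \<theta> = 0 * cF p q \<theta> * cF p q \<theta> + EE p q b * Dc p q a \<theta> * cF p q \<theta> + EE p q b * cF p q \<theta> * Dc p q a \<theta>"

definition DDF :: "nat \<Rightarrow> nat \<Rightarrow> nat \<Rightarrow> nat \<Rightarrow> (nat \<Rightarrow> real) \<Rightarrow> real fps" where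
  "DDF p q a b \<theta> = (if b = p + q + 1 then (if a = p + q + 1 then FF (p+q+1) (Suc (Suc 0)) \<theta> else 0) else 0)"

definition G2 :: "nat \<Rightarrow> nat \<Rightarrow> nat \<Rightarrow> nat \<Rightarrow> (nat \<Rightarrow> real) \<Rightarrow> real fps" where
  "G2 p q a b \<theta> =
     (DDc p q a b \<theta> * aF p \<theta> * FF (p+q+1) 0 \<theta> + Dc p q b \<theta> * (- EA p a) * FF (p+q+1) 0 \<theta>
        + Dc p q b \<theta> * aF p \<theta> * DF p q a 0 \<theta>)
   + (Dc p q a \<theta> * (- EA p b) * FF (p+q+1) 0 \<theta> + cF p q \<theta> * 0 * FF (p+q+1) 0 \<theta>
        + cF p q \<theta> * (- EA p b) * DF p q a 0 \<theta>)
   + (Dc p q a \<theta> * aF p \<theta> * DF p q b 0 \<theta> + cF p q \<theta> * (- EA p a) * DF p q b 0 \<theta>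
        + cF p q \<theta> * aF p \<theta> * DDF p q a b \<theta>)"

lemma hasD_FF0: "hasD i (FF (p+q+1) 0) (\<lambda>\<theta>. DF p q i 0 \<theta>)"
  using hasD_FF[of i "p+q+1" 0] by (simp add: DF_def)

lemma hasD_gam: "hasD i (gam p q) (G1 p q i)"
  unfolding gam_def G1_def
  by (rule hasD_mult3[OF hasD_cF hasD_aF hasD_FF0])

lemma hasD_Dc: "hasD a (Dc p q b) (DDc p q a b)"
proof -
  have "hasD a (\<lambda>\<theta>. EE p q b * cF p q \<theta> * cF p q \<theta>) (DDc p q a b)"
    unfolding DDc_def[abs_def] by (rule hasD_mult3[OF hasD_const hasD_cF hasD_cF])
  thus ?thesis by (simp add: Dc_def[abs_def])
qed

lemma hasD_DF: "hasD a (DF p q b 0) (DDF p q a b)"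
proof (cases "b = p + q + 1")
  case True
  have "hasD a (FF (p+q+1) (Suc 0)) (\<lambda>\<theta>. if a = p+q+1 then FF (p+q+1) (Suc (Suc 0)) \<theta> else 0)"
    using hasD_FF[of a "p+q+1" "Suc 0"] .
  thus ?thesis using True
    by (simp add: DF_def[abs_def] DDF_def[abs_def])
next
  case False
  show ?thesis using hasD_const[of a 0] False
    by (simp add: DF_def[abs_def] DDF_def[abs_def])
qed

lemma hasD_G1: "hasD a (G1 p q b) (G2 p q a b)"
  unfolding G1_def[abs_def] G2_def[abs_def]
  by (intro hasD_add hasD_mult3 hasD_Dc hasD_aF hasD_FF0 hasD_cF hasD_const hasD_DF)


definition good :: "(nat \<Rightarrow> real) set \<Rightarrow> ((nat \<Rightarrow> real) \<Rightarrow> (nat \<Rightarrow> real) \<Rightarrow> real) \<Rightarrow> ((nat \<Rightarrow> real) \<Rightarrow> real fps) \<Rightarrow> bool" where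
  "good T N f \<longleftrightarrow> (\<exists>U. SW U \<and> (\<forall>\<theta>\<in>T. \<forall>n. \<bar>f \<theta> $ n\<bar> \<le> U n) \<and>
      (\<forall>\<theta>1\<in>T. \<forall>\<theta>2\<in>T. \<forall>n. \<bar>f \<theta>1 $ n - f \<theta>2 $ n\<bar> \<le> U n * N \<theta>1 \<theta>2))"

lemma goodI:
  assumes "SW U" "\<And>\<theta> n. \<theta> \<in> T \<Longrightarrow> \<bar>f \<theta> $ n\<bar> \<le> U n"
    "\<And>\<theta>1 \<theta>2 n. \<theta>1 \<in> T \<Longrightarrow> \<theta>2 \<in> T \<Longrightarrow> \<bar>f \<theta>1 $ n - f \<theta>2 $ n\<bar> \<le> U n * N \<theta>1 \<theta>2"
  shows "good T N f"
  using assms unfolding good_def by blast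

lemma abs_fps_scale: fixes U :: "nat \<Rightarrow> real" shows "Abs_fps (\<lambda>k. U k * c) = fps_const c * Abs_fps U"
  by (rule fps_ext) (simp add: mult.commute)

lemma good_mult:
  assumes N: "\<And>\<theta>1 \<theta>2. \<theta>1 \<in> T \<Longrightarrow> \<theta>2 \<in> T \<Longrightarrow> N \<theta>1 \<theta>2 \<ge> 0"
  assumes "good T N f" "good T N g"
  shows "good T N (\<lambda>\<theta>. f \<theta> * g \<theta>)"
proof -
  obtain U where U: "SW U" "\<forall>\<theta>\<in>T. \<forall>n. \<bar>f \<theta> $ n\<bar> \<le> U n"
      "\<forall>\<theta>1\<in>T. \<forall>\<theta>2\<in>T. \<forall>n. \<bar>f \<theta>1 $ n - f \<theta>2 $ n\<bar> \<le> U n * N \<theta>1 \<theta>2"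
    using assms(2) unfolding good_def by blast
  obtain V where V: "SW V" "\<forall>\<theta>\<in>T. \<forall>n. \<bar>g \<theta> $ n\<bar> \<le> V n"
      "\<forall>\<theta>1\<in>T. \<forall>\<theta>2\<in>T. \<forall>n. \<bar>g \<theta>1 $ n - g \<theta>2 $ n\<bar> \<le> V n * N \<theta>1 \<theta>2"
    using assms(3) unfolding good_def by blast
  define W where "W = (\<lambda>n. 2 * (Abs_fps U * Abs_fps V) $ n)"
  have Wc: "SW (\<lambda>n. (Abs_fps U * Abs_fps V) $ n)" by (rule SW_conv[OF U(1) V(1)])
  show ?thesis
  proof (rule goodI[where U = W])
    show "SW W" unfolding W_def by (rule SW_scale[OF Wc]) auto
  next
    fix \<theta> n assume t: "\<theta> \<in> T"
    have "\<bar>(f \<theta> * g \<theta>) $ n\<bar> \<le> (Abs_fps U * Abs_fps V) $ n"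
      using fps_mult_majorant[of "f \<theta>" U "g \<theta>" V n] U V t by auto
    moreover have "0 \<le> (Abs_fps U * Abs_fps V) $ n" using Wc by (auto simp: SW_def)
    ultimately show "\<bar>(f \<theta> * g \<theta>) $ n\<bar> \<le> W n" by (simp add: W_def)
  next
    fix \<theta>1 \<theta>2 n assume t: "\<theta>1 \<in> T" "\<theta>2 \<in> T"
    define c where "c = N \<theta>1 \<theta>2"
    have c: "c \<ge> 0" using N t by (simp add: c_def)
    have e: "f \<theta>1 * g \<theta>1 - f \<theta>2 * g \<theta>2 = (f \<theta>1 - f \<theta>2) * g \<theta>1 + f \<theta>2 * (g \<theta>1 - g \<theta>2)"
      by (simp add: algebra_simps)
    have 1: "\<bar>((f \<theta>1 - f \<theta>2) * g \<theta>1) $ n\<bar> \<le> (Abs_fps (\<lambda>k. U k * c) * Abs_fps V) $ n"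
      using fps_mult_majorant[of "f \<theta>1 - f \<theta>2" "\<lambda>k. U k * c" "g \<theta>1" V n] U V t by (auto simp: c_def)
    have 2: "\<bar>(f \<theta>2 * (g \<theta>1 - g \<theta>2)) $ n\<bar> \<le> (Abs_fps U * Abs_fps (\<lambda>k. V k * c)) $ n"
      using fps_mult_majorant[of "f \<theta>2" U "g \<theta>1 - g \<theta>2" "\<lambda>k. V k * c" n] U V t by (auto simp: c_def)
    have "\<bar>(f \<theta>1 * g \<theta>1) $ n - (f \<theta>2 * g \<theta>2) $ n\<bar> = \<bar>((f \<theta>1 - f \<theta>2) * g \<theta>1) $ n + (f \<theta>2 * (g \<theta>1 - g \<theta>2)) $ n\<bar>"
      using arg_cong[OF e, of "\<lambda>h. h $ n"] by simp
    also have "\<dots> \<le> (Abs_fps (\<lambda>k. U k * c) * Abs_fps V) $ n + (Abs_fps U * Abs_fps (\<lambda>k. V k * c)) $ n"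
      using 1 2 by linarith
    also have "\<dots> = W n * c"
    proof -
      have a: "(Abs_fps (\<lambda>k. U k * c) * Abs_fps V) $ n = c * (Abs_fps U * Abs_fps V) $ n"
        by (simp only: abs_fps_scale mult.assoc fps_mult_left_const_nth)
      have b: "(Abs_fps U * Abs_fps (\<lambda>k. V k * c)) $ n = c * (Abs_fps U * Abs_fps V) $ n"
        by (simp only: abs_fps_scale mult.left_commute[of "Abs_fps U"] fps_mult_left_const_nth)
      show ?thesis by (simp add: a b W_def)
    qed
    finally show "\<bar>(f \<theta>1 * g \<theta>1) $ n - (f \<theta>2 * g \<theta>2) $ n\<bar> \<le> W n * N \<theta>1 \<theta>2" by (simp add: c_def)
  qed
qed

lemma good_add:
  assumes "good T N f" "good T N g"
  shows "good T N (\<lambda>\<theta>. f \<theta> + g \<theta>)"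
proof -
  obtain U where U: "SW U" "\<forall>\<theta>\<in>T. \<forall>n. \<bar>f \<theta> $ n\<bar> \<le> U n"
      "\<forall>\<theta>1\<in>T. \<forall>\<theta>2\<in>T. \<forall>n. \<bar>f \<theta>1 $ n - f \<theta>2 $ n\<bar> \<le> U n * N \<theta>1 \<theta>2"
    using assms(1) unfolding good_def by blast
  obtain V where V: "SW V" "\<forall>\<theta>\<in>T. \<forall>n. \<bar>g \<theta> $ n\<bar> \<le> V n"
      "\<forall>\<theta>1\<in>T. \<forall>\<theta>2\<in>T. \<forall>n. \<bar>g \<theta>1 $ n - g \<theta>2 $ n\<bar> \<le> V n * N \<theta>1 \<theta>2"
    using assms(2) unfolding good_def by blast
  show ?thesis
  proof (rule goodI[where U = "\<lambda>n. U n + V n"])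
    show "SW (\<lambda>n. U n + V n)" by (rule SW_add[OF U(1) V(1)])
  next
    fix \<theta> n assume "\<theta> \<in> T"
    thus "\<bar>(f \<theta> + g \<theta>) $ n\<bar> \<le> U n + V n" using U V by (simp add: abs_triangle_ineq order_trans[OF abs_triangle_ineq] add_mono)
  next
    fix \<theta>1 \<theta>2 n assume t: "\<theta>1 \<in> T" "\<theta>2 \<in> T"
    have "\<bar>(f \<theta>1 + g \<theta>1) $ n - (f \<theta>2 + g \<theta>2) $ n\<bar> \<le> \<bar>f \<theta>1 $ n - f \<theta>2 $ n\<bar> + \<bar>g \<theta>1 $ n - g \<theta>2 $ n\<bar>"
      by simp
    also have "\<dots> \<le> U n * N \<theta>1 \<theta>2 + V n * N \<theta>1 \<theta>2" using U V t by (intro add_mono) auto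
    finally show "\<bar>(f \<theta>1 + g \<theta>1) $ n - (f \<theta>2 + g \<theta>2) $ n\<bar> \<le> (U n + V n) * N \<theta>1 \<theta>2"
      by (simp add: algebra_simps)
  qed
qed

lemma good_const:
  assumes N: "\<And>\<theta>1 \<theta>2. \<theta>1 \<in> T \<Longrightarrow> \<theta>2 \<in> T \<Longrightarrow> N \<theta>1 \<theta>2 \<ge> 0"
  assumes "SW (\<lambda>n. \<bar>F $ n\<bar>)"
  shows "good T N (\<lambda>_. F)"
  by (rule goodI[OF assms(2)]) (auto intro!: mult_nonneg_nonneg N)

lemma good_finite:
  assumes N: "\<And>\<theta>1 \<theta>2. \<theta>1 \<in> T \<Longrightarrow> \<theta>2 \<in> T \<Longrightarrow> N \<theta>1 \<theta>2 \<ge> 0"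
  assumes "\<And>n. n > K \<Longrightarrow> F $ n = 0"
  shows "good T N (\<lambda>_. F)"
  by (rule good_const[OF N]) (auto intro!: SW_finite[of K] simp: assms(2))

lemma good_if: "(P \<Longrightarrow> good T N f) \<Longrightarrow> (\<not> P \<Longrightarrow> good T N g) \<Longrightarrow> good T N (\<lambda>\<theta>. if P then f \<theta> else g \<theta>)"
  by (cases P) auto

lemma good_neg: "good T N f \<Longrightarrow> good T N (\<lambda>\<theta>. - f \<theta>)"
  unfolding good_def by (auto simp: abs_minus_commute)


lemma param_norm_nonneg: "param_norm m f \<ge> 0"
  by (simp add: param_norm_def sum_nonneg)

lemma param_norm_coord: "k \<in> {1..m} \<Longrightarrow> \<bar>f k\<bar> \<le> param_norm m f"
proof -
  assume k: "k \<in> {1..m}"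
  have "(f k)\<^sup>2 \<le> (\<Sum>i=1..m. (f i)\<^sup>2)" by (rule member_le_sum) (use k in auto)
  hence "sqrt ((f k)\<^sup>2) \<le> sqrt (\<Sum>i=1..m. (f i)\<^sup>2)" by (rule real_sqrt_le_mono)
  thus ?thesis by (simp add: param_norm_def)
qed

abbreviation NN :: "nat \<Rightarrow> nat \<Rightarrow> (nat \<Rightarrow> real) \<Rightarrow> (nat \<Rightarrow> real) \<Rightarrow> real" where
  "NN p q \<theta>1 \<theta>2 \<equiv> param_norm (p + q + 1) (\<lambda>k. \<theta>1 k - \<theta>2 k)"

lemma good_cF:
  assumes "\<kappa> > 0"
  shows "good (Theta_kappa p q \<kappa> d1 d2) (NN p q) (cF p q)"
proof -
  define T where "T = Theta_kappa p q \<kappa> d1 d2"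
  define \<rho> where "\<rho> = 1 / (1 + \<kappa>)"
  have \<rho>: "0 \<le> \<rho>" "\<rho> < 1" using assms by (auto simp: \<rho>_def)
  define Mc where "Mc = (\<lambda>n. (geoG \<rho> ^ q) $ n)"
  have SWMc: "SW Mc" unfolding Mc_def by (rule SW_geoG_pow[OF \<rho>])
  define I where "I = (\<lambda>k::nat. if 1 \<le> k \<and> k \<le> q then 1 else (0::real))"
  have SWI: "SW I" by (rule SW_finite[of q]) (auto simp: I_def)
  have bnd: "\<bar>cF p q \<theta> $ n\<bar> \<le> Mc n" if "\<theta> \<in> T" for \<theta> n
  proof -
    have r: "\<And>z. lag_poly q (\<lambda>j. \<theta> (p + j)) z = 0 \<Longrightarrow> cmod z \<ge> 1 + \<kappa>"
      using that by (auto simp: T_def Theta_kappa_def)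
    show ?thesis using inv_lag_bound[where n = q and c = "\<lambda>j. \<theta> (p + j)" and k = n, OF r assms]
      by (simp add: cF_def b_theta_fps_def Mc_def \<rho>_def)
  qed
  define U where "U = (\<lambda>n. Mc n + ((Abs_fps Mc * Abs_fps I) * Abs_fps Mc) $ n)"
  have SW1: "SW (\<lambda>n. (Abs_fps Mc * Abs_fps I) $ n)" by (rule SW_conv[OF SWMc SWI])
  have SW2: "SW (\<lambda>n. ((Abs_fps Mc * Abs_fps I) * Abs_fps Mc) $ n)"
    using SW_conv[OF SW1 SWMc] by (simp add: fps_nth_inverse)
  show ?thesis unfolding T_def[symmetric]
  proof (rule goodI[where U = U])
    show "SW U" unfolding U_def by (rule SW_add[OF SWMc SW2])
  next
    fix \<theta> n assume "\<theta> \<in> T"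
    thus "\<bar>cF p q \<theta> $ n\<bar> \<le> U n" using bnd[of \<theta> n] SW2 by (auto simp: U_def SW_def intro: add_increasing2)
  next
    fix \<theta>1 \<theta>2 n assume t: "\<theta>1 \<in> T" "\<theta>2 \<in> T"
    define c where "c = NN p q \<theta>1 \<theta>2"
    have c: "c \<ge> 0" by (simp add: c_def param_norm_nonneg)
    define D where "D = b_theta_fps p q \<theta>2 - b_theta_fps p q \<theta>1"
    have e: "cF p q \<theta>1 - cF p q \<theta>2 = cF p q \<theta>1 * D * cF p q \<theta>2"
    proof -
      have 1: "cF p q \<theta>1 * b_theta_fps p q \<theta>1 = 1" unfolding cF_def
        by (rule inverse_mult_eq_1) (simp add: b_theta_fps_def)
      have 2: "b_theta_fps p q \<theta>2 * cF p q \<theta>2 = 1" unfolding cF_def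
        by (rule inverse_mult_eq_1') (simp add: b_theta_fps_def)
      have "cF p q \<theta>1 * D * cF p q \<theta>2 = cF p q \<theta>1 * (b_theta_fps p q \<theta>2 * cF p q \<theta>2) - (cF p q \<theta>1 * b_theta_fps p q \<theta>1) * cF p q \<theta>2"
        by (simp add: D_def algebra_simps)
      thus ?thesis by (simp add: 1 2)
    qed
    have Db: "\<bar>D $ k\<bar> \<le> I k * c" for k
    proof (cases "1 \<le> k \<and> k \<le> q")
      case True
      have "k + p \<in> {1..p+q+1}" using True by auto
      hence "\<bar>\<theta>1 (k+p) - \<theta>2 (k+p)\<bar> \<le> c" unfolding c_def by (rule param_norm_coord[where f = "\<lambda>k. \<theta>1 k - \<theta>2 k"])
      thus ?thesis using True by (auto simp: D_def b_theta_fps_def I_def add.commute abs_minus_commute)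
    next
      case False thus ?thesis by (auto simp: D_def b_theta_fps_def I_def)
    qed
    have m1: "\<bar>(cF p q \<theta>1 * D) $ k\<bar> \<le> (Abs_fps Mc * Abs_fps (\<lambda>k. I k * c)) $ k" for k
      using fps_mult_majorant[of "cF p q \<theta>1" Mc D "\<lambda>k. I k * c" k] bnd t Db by auto
    have m2: "\<bar>(cF p q \<theta>1 * D * cF p q \<theta>2) $ n\<bar> \<le> ((Abs_fps Mc * Abs_fps (\<lambda>k. I k * c)) * Abs_fps Mc) $ n"
      using fps_mult_majorant[of "cF p q \<theta>1 * D" "\<lambda>k. (Abs_fps Mc * Abs_fps (\<lambda>k. I k * c)) $ k" "cF p q \<theta>2" Mc n]
        m1 bnd t by (auto simp: fps_nth_inverse)
    also have "\<dots> = c * ((Abs_fps Mc * Abs_fps I) * Abs_fps Mc) $ n"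
      by (simp only: abs_fps_scale mult.left_commute[of "Abs_fps Mc"] mult.assoc fps_mult_left_const_nth)
    also have "\<dots> \<le> U n * c" using SWMc c by (auto simp: U_def SW_def algebra_simps)
    finally show "\<bar>cF p q \<theta>1 $ n - cF p q \<theta>2 $ n\<bar> \<le> U n * NN p q \<theta>1 \<theta>2"
      using arg_cong[OF e, of "\<lambda>f. f $ n"] by (simp add: c_def)
  qed
qed

lemma good_aF:
  assumes "\<kappa> > 0"
  shows "good (Theta_kappa p q \<kappa> d1 d2) (NN p q) (aF p)"
proof -
  define T where "T = Theta_kappa p q \<kappa> d1 d2"
  define U where "U = (\<lambda>n::nat. if n \<le> p then 2 ^ p + 1 else (0::real))"
  have cb: "\<bar>\<theta> k\<bar> \<le> 2 ^ p" if "\<theta> \<in> T" "1 \<le> k" "k \<le> p" for \<theta> k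
  proof -
    have r: "\<And>z. lag_poly p \<theta> z = 0 \<Longrightarrow> cmod z \<ge> 1 + \<kappa>"
      using that by (auto simp: T_def Theta_kappa_def)
    show ?thesis by (rule lag_coeff_bound[OF r assms that(2,3)])
  qed
  show ?thesis unfolding T_def[symmetric]
  proof (rule goodI[where U = U])
    show "SW U" by (rule SW_finite[of p]) (auto simp: U_def)
  next
    fix \<theta> n assume "\<theta> \<in> T"
    thus "\<bar>aF p \<theta> $ n\<bar> \<le> U n" using cb[of \<theta> n] by (auto simp: aF_def a_theta_fps_def U_def)
  next
    fix \<theta>1 \<theta>2 n assume t: "\<theta>1 \<in> T" "\<theta>2 \<in> T"
    define c where "c = NN p q \<theta>1 \<theta>2"
    have c: "c \<ge> 0" by (simp add: c_def param_norm_nonneg)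
    show "\<bar>aF p \<theta>1 $ n - aF p \<theta>2 $ n\<bar> \<le> U n * NN p q \<theta>1 \<theta>2"
    proof (cases "1 \<le> n \<and> n \<le> p")
      case True
      have "n \<in> {1..p+q+1}" using True by auto
      hence "\<bar>\<theta>1 n - \<theta>2 n\<bar> \<le> c" unfolding c_def by (rule param_norm_coord[where f = "\<lambda>k. \<theta>1 k - \<theta>2 k"])
      moreover have "c \<le> U n * c"
      proof -
        have "0 \<le> 2 ^ p * c" using c by simp
        thus ?thesis using True by (simp add: U_def algebra_simps)
      qed
      ultimately show ?thesis using True by (auto simp: aF_def a_theta_fps_def c_def abs_minus_commute)
    next
      case False
      thus ?thesis using c by (auto simp: aF_def a_theta_fps_def U_def c_def)
    qed
  qed
qed


lemma pderiv_pow_one: "(pderiv ^^ Suc j) (1 :: real poly) = 0"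
  by (induction j) simp_all

lemma poly_lip:
  fixes P :: "real poly" and a b x y L :: real
  assumes "\<And>z. z \<in> {a..b} \<Longrightarrow> \<bar>poly (pderiv P) z\<bar> \<le> L" "x \<in> {a..b}" "y \<in> {a..b}"
  shows "\<bar>poly P x - poly P y\<bar> \<le> L * \<bar>x - y\<bar>"
proof -
  have main: "\<bar>poly P v - poly P u\<bar> \<le> L * \<bar>v - u\<bar>" if "u < v" "u \<in> {a..b}" "v \<in> {a..b}" for u v :: real
  proof -
    obtain z where z: "u < z" "z < v" "poly P v - poly P u = (v - u) * poly (pderiv P) z"
      using MVT2[OF \<open>u < v\<close>, of "poly P" "poly (pderiv P)"] by auto
    have "z \<in> {a..b}" using z that by auto
    hence "\<bar>poly (pderiv P) z\<bar> \<le> L" by (rule assms(1))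
    thus ?thesis using z that by (simp add: abs_mult mult.commute mult_left_mono)
  qed
  show ?thesis
  proof (cases x y rule: linorder_cases)
    case less thus ?thesis using main[of x y] assms by (simp add: abs_minus_commute)
  next
    case greater thus ?thesis using main[of y x] assms by (simp add: abs_minus_commute)
  qed simp
qed

lemma alpha_unif_bound:
  assumes "0 < d1" "d1 \<le> x" "x \<le> 1/2" "j \<le> 3"
  shows "\<bar>poly ((pderiv ^^ j) (\<alpha>p m)) x\<bar> \<le> 12 / (d1/4)^3 * real m powr (-1 - d1/2) + (if m = 0 then 1 else 0)"
proof (cases "m = 0")
  case True
  have "\<alpha>p 0 = 1" by (simp add: \<alpha>p_def)
  hence "\<bar>poly ((pderiv ^^ j) (\<alpha>p m)) x\<bar> \<le> 1" using True
    by (cases j) (simp_all only: pderiv_pow_one, simp_all)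
  thus ?thesis using True by simp
next
  case False
  define r where "r = d1 / 4"
  have r: "0 < r" "r \<le> 1" using assms by (auto simp: r_def)
  have "\<bar>poly ((pderiv ^^ j) (\<alpha>p m)) x\<bar> \<le> fact j * (2 * real m powr (-1 - d1/2)) / r ^ j"
    using alpha_deriv_bound[of m d1 x j] False assms by (simp add: r_def)
  also have "\<dots> \<le> 6 * (2 * real m powr (-1 - d1/2)) / r ^ 3"
  proof (rule frac_le)
    have "fact j \<le> (fact 3 :: real)" using assms(4) by (intro fact_mono) auto
    hence "fact j \<le> (6::real)" by (simp add: fact_numeral)
    thus "fact j * (2 * real m powr (-1 - d1/2)) \<le> 6 * (2 * real m powr (-1 - d1/2))"
      by (intro mult_right_mono) auto
    show "r ^ 3 \<le> r ^ j" using r assms(4) by (intro power_decreasing) auto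
  qed (use r in auto)
  also have "\<dots> = 12 / (d1/4)^3 * real m powr (-1 - d1/2)" by (simp add: r_def)
  finally show ?thesis using False by simp
qed

lemma good_FF:
  assumes "0 < d1" "d2 \<le> 1/2" "k \<le> 2"
  shows "good (Theta_kappa p q \<kappa> d1 d2) (NN p q) (FF (p+q+1) k)"
proof -
  define T where "T = Theta_kappa p q \<kappa> d1 d2"
  define U where "U = (\<lambda>m::nat. 12 / (d1/4)^3 * real m powr (-1 - d1/2) + (if m = 0 then 1 else (0::real)))"
  have dT: "\<theta> (p+q+1) \<in> {d1..d2}" if "\<theta> \<in> T" for \<theta> using that by (auto simp: T_def Theta_kappa_def)
  have ub: "\<bar>poly ((pderiv ^^ j) (\<alpha>p m)) x\<bar> \<le> U m" if "x \<in> {d1..d2}" "j \<le> 3" for x j m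
    unfolding U_def using that assms by (intro alpha_unif_bound) auto
  show ?thesis unfolding T_def[symmetric]
  proof (rule goodI[where U = U])
    have "SW (\<lambda>m. 12 / (d1/4)^3 * real m powr (-1 - d1/2))"
      using assms(1) summable_real_powr_iff[of "-1 - d1/2"]
      by (intro SW_scale) (auto simp: SW_def)
    moreover have "SW (\<lambda>m::nat. if m = 0 then 1 else (0::real))" by (rule SW_finite[of 0]) auto
    ultimately show "SW U" unfolding U_def by (rule SW_add)
  next
    fix \<theta> n assume "\<theta> \<in> T"
    thus "\<bar>FF (p+q+1) k \<theta> $ n\<bar> \<le> U n" using ub[of "\<theta> (p+q+1)" k n] dT assms by (simp add: FF_def)
  next
    fix \<theta>1 \<theta>2 n assume t: "\<theta>1 \<in> T" "\<theta>2 \<in> T"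
    have "\<bar>poly ((pderiv ^^ k) (\<alpha>p n)) (\<theta>1 (p+q+1)) - poly ((pderiv ^^ k) (\<alpha>p n)) (\<theta>2 (p+q+1))\<bar>
        \<le> U n * \<bar>\<theta>1 (p+q+1) - \<theta>2 (p+q+1)\<bar>"
    proof (rule poly_lip[where a = d1 and b = d2])
      fix z assume "z \<in> {d1..d2}"
      thus "\<bar>poly (pderiv ((pderiv ^^ k) (\<alpha>p n))) z\<bar> \<le> U n"
        using ub[of z "Suc k" n] assms by simp
    qed (use dT t in auto)
    also have "\<dots> \<le> U n * NN p q \<theta>1 \<theta>2"
    proof (rule mult_left_mono)
      show "\<bar>\<theta>1 (p+q+1) - \<theta>2 (p+q+1)\<bar> \<le> NN p q \<theta>1 \<theta>2"
        by (rule param_norm_coord[where f = "\<lambda>k. \<theta>1 k - \<theta>2 k"]) auto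
      show "0 \<le> U n" using assms(1) by (auto simp: U_def intro!: add_nonneg_nonneg mult_nonneg_nonneg)
    qed
    finally show "\<bar>FF (p+q+1) k \<theta>1 $ n - FF (p+q+1) k \<theta>2 $ n\<bar> \<le> U n * NN p q \<theta>1 \<theta>2"
      by (simp add: FF_def)
  qed
qed

lemma NN_nonneg: "NN p q \<theta>1 \<theta>2 \<ge> 0" by (rule param_norm_nonneg)

lemma good_all:
  assumes "\<kappa> > 0" "0 < d1" "d2 \<le> 1/2"
  shows "good (Theta_kappa p q \<kappa> d1 d2) (NN p q) (gam p q)"
    and "good (Theta_kappa p q \<kappa> d1 d2) (NN p q) (G1 p q b)"
    and "good (Theta_kappa p q \<kappa> d1 d2) (NN p q) (G2 p q a b)"
proof -
  let ?T = "Theta_kappa p q \<kappa> d1 d2" and ?N = "NN p q"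
  have N: "\<And>\<theta>1 \<theta>2. \<theta>1 \<in> ?T \<Longrightarrow> \<theta>2 \<in> ?T \<Longrightarrow> ?N \<theta>1 \<theta>2 \<ge> 0" by (rule NN_nonneg)
  note mult = good_mult[OF N]
  have c: "good ?T ?N (cF p q)" by (rule good_cF[OF assms(1)])
  have a: "good ?T ?N (aF p)" by (rule good_aF[OF assms(1)])
  have F: "good ?T ?N (FF (p+q+1) k)" if "k \<le> 2" for k by (rule good_FF[OF assms(2,3) that])
  have EE: "good ?T ?N (\<lambda>_. EE p q i)" for i by (rule good_finite[OF N, where K = "p+q"]) (auto simp: EE_def)
  have EA: "good ?T ?N (\<lambda>_. - EA p i)" for i by (rule good_finite[OF N, where K = "p"]) (auto simp: EA_def)
  have z: "good ?T ?N (\<lambda>_. 0)" by (rule good_finite[OF N, where K = 0]) auto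
  have Dc: "good ?T ?N (Dc p q i)" for i
    unfolding Dc_def[abs_def] by (intro mult EE c)
  have DF: "good ?T ?N (DF p q i 0)" for i
    unfolding DF_def[abs_def] by (intro good_if F z) auto
  have DDF: "good ?T ?N (DDF p q a b)"
    unfolding DDF_def[abs_def] by (intro good_if F z) auto
  have DDc: "good ?T ?N (DDc p q a b)"
    unfolding DDc_def[abs_def] by (intro good_add mult EE c Dc z)
  have F0: "good ?T ?N (FF (p+q+1) 0)" by (rule F) simp
  show "good ?T ?N (gam p q)" unfolding gam_def[abs_def] by (intro mult c a F0)
  show "good ?T ?N (G1 p q b)" unfolding G1_def[abs_def] by (intro good_add mult c a F0 Dc EA DF)
  show "good ?T ?N (G2 p q a b)" unfolding G2_def[abs_def] by (intro good_add mult c a F0 Dc EA DF DDF DDc z)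
qed


lemma gamma_eq:
  assumes "\<theta> (p+q+1) \<in> {0<..<1}"
  shows "gamma_coef p q \<theta> s = gam p q \<theta> $ s"
proof -
  have "frac_fps (\<theta> (p+q+1)) = FF (p+q+1) 0 \<theta>"
    using assms by (intro fps_ext) (simp add: frac_fps_def FF_def frac_alpha_poly)
  thus ?thesis by (simp add: gamma_coef_def gam_def cF_def aF_def)
qed

definition epsG :: "nat \<Rightarrow> nat \<Rightarrow> (int \<Rightarrow> 'a \<Rightarrow> real) \<Rightarrow> (nat \<Rightarrow> real) \<Rightarrow> nat \<Rightarrow> 'a \<Rightarrow> real" where
  "epsG p q X \<theta> t \<omega> = (\<Sum>s=0..<t. gam p q \<theta> $ s * X (int t - int s) \<omega>)"
definition E1 :: "nat \<Rightarrow> nat \<Rightarrow> (int \<Rightarrow> 'a \<Rightarrow> real) \<Rightarrow> nat \<Rightarrow> (nat \<Rightarrow> real) \<Rightarrow> nat \<Rightarrow> 'a \<Rightarrow> real" where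
  "E1 p q X b \<theta> t \<omega> = (\<Sum>s=0..<t. G1 p q b \<theta> $ s * X (int t - int s) \<omega>)"
definition E2 :: "nat \<Rightarrow> nat \<Rightarrow> (int \<Rightarrow> 'a \<Rightarrow> real) \<Rightarrow> nat \<Rightarrow> nat \<Rightarrow> (nat \<Rightarrow> real) \<Rightarrow> nat \<Rightarrow> 'a \<Rightarrow> real" where
  "E2 p q X a b \<theta> t \<omega> = (\<Sum>s=0..<t. G2 p q a b \<theta> $ s * X (int t - int s) \<omega>)"
definition QG :: "nat \<Rightarrow> nat \<Rightarrow> (int \<Rightarrow> 'a \<Rightarrow> real) \<Rightarrow> nat \<Rightarrow> (nat \<Rightarrow> real) \<Rightarrow> 'a \<Rightarrow> real" where
  "QG p q X n \<theta> \<omega> = (1 / real n) * (\<Sum>t=1..n. (epsG p q X \<theta> t \<omega>)\<^sup>2)"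
definition D1 :: "nat \<Rightarrow> nat \<Rightarrow> (int \<Rightarrow> 'a \<Rightarrow> real) \<Rightarrow> nat \<Rightarrow> nat \<Rightarrow> (nat \<Rightarrow> real) \<Rightarrow> 'a \<Rightarrow> real" where
  "D1 p q X n b \<theta> \<omega> = (1 / real n) * (\<Sum>t=1..n. 2 * epsG p q X \<theta> t \<omega> * E1 p q X b \<theta> t \<omega>)"
definition D2 :: "nat \<Rightarrow> nat \<Rightarrow> (int \<Rightarrow> 'a \<Rightarrow> real) \<Rightarrow> nat \<Rightarrow> nat \<Rightarrow> nat \<Rightarrow> (nat \<Rightarrow> real) \<Rightarrow> 'a \<Rightarrow> real" where
  "D2 p q X n a b \<theta> \<omega> = (1 / real n) * (\<Sum>t=1..n. 2 * (E1 p q X a \<theta> t \<omega> * E1 p q X b \<theta> t \<omega> + epsG p q X \<theta> t \<omega> * E2 p q X a b \<theta> t \<omega>))"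

lemma hasD_sumX:
  assumes "hasD j f f'"
  shows "((\<lambda>h. \<Sum>s=0..<t. f (\<theta>(j:=h)) $ s * x s) has_real_derivative (\<Sum>s=0..<t. f' \<theta> $ s * x s)) (at (\<theta> j))"
  using assms unfolding hasD_def by (intro DERIV_sum DERIV_cmult_right) auto

lemma deriv_eps: "((\<lambda>h. epsG p q X (\<theta>(j:=h)) t \<omega>) has_real_derivative E1 p q X j \<theta> t \<omega>) (at (\<theta> j))"
  unfolding epsG_def E1_def by (rule hasD_sumX[OF hasD_gam])

lemma deriv_E1: "((\<lambda>h. E1 p q X b (\<theta>(a:=h)) t \<omega>) has_real_derivative E2 p q X a b \<theta> t \<omega>) (at (\<theta> a))"
  unfolding E2_def E1_def by (rule hasD_sumX[OF hasD_G1])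

lemma deriv_QG: "((\<lambda>h. QG p q X n (\<theta>(j:=h)) \<omega>) has_real_derivative D1 p q X n j \<theta> \<omega>) (at (\<theta> j))"
proof -
  have "((\<lambda>h. (1 / real n) * (\<Sum>t=1..n. epsG p q X (\<theta>(j:=h)) t \<omega> * epsG p q X (\<theta>(j:=h)) t \<omega>)) has_real_derivative
     (1 / real n) * (\<Sum>t=1..n. epsG p q X (\<theta>(j:=\<theta> j)) t \<omega> * E1 p q X j \<theta> t \<omega> + E1 p q X j \<theta> t \<omega> * epsG p q X (\<theta>(j:=\<theta> j)) t \<omega>)) (at (\<theta> j))"
    by (intro DERIV_cmult DERIV_sum DERIV_mult' deriv_eps)
  moreover have "\<And>t. epsG p q X \<theta> t \<omega> * E1 p q X j \<theta> t \<omega> + E1 p q X j \<theta> t \<omega> * epsG p q X \<theta> t \<omega> = 2 * epsG p q X \<theta> t \<omega> * E1 p q X j \<theta> t \<omega>"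
    by simp
  ultimately show ?thesis unfolding QG_def D1_def power2_eq_square by simp
qed

lemma deriv_D1: "((\<lambda>h. D1 p q X n b (\<theta>(a:=h)) \<omega>) has_real_derivative D2 p q X n a b \<theta> \<omega>) (at (\<theta> a))"
proof -
  have "((\<lambda>h. (1 / real n) * (\<Sum>t=1..n. 2 * (epsG p q X (\<theta>(a:=h)) t \<omega> * E1 p q X b (\<theta>(a:=h)) t \<omega>))) has_real_derivative
     (1 / real n) * (\<Sum>t=1..n. 2 * (epsG p q X (\<theta>(a:=\<theta> a)) t \<omega> * E2 p q X a b \<theta> t \<omega> + E1 p q X a \<theta> t \<omega> * E1 p q X b (\<theta>(a:=\<theta> a)) t \<omega>))) (at (\<theta> a))"
    by (intro DERIV_cmult DERIV_sum DERIV_mult' deriv_eps deriv_E1)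
  moreover have "\<And>t. 2 * (epsG p q X \<theta> t \<omega> * E2 p q X a b \<theta> t \<omega> + E1 p q X a \<theta> t \<omega> * E1 p q X b \<theta> t \<omega>) =
     2 * (E1 p q X a \<theta> t \<omega> * E1 p q X b \<theta> t \<omega> + epsG p q X \<theta> t \<omega> * E2 p q X a b \<theta> t \<omega>)"
    by simp
  ultimately show ?thesis unfolding D1_def D2_def by (simp add: mult.assoc add.commute)
qed

lemma dom_ev:
  assumes "\<theta> e \<in> {0<..<1::real}"
  shows "\<forall>\<^sub>F h in nhds (\<theta> j). (\<theta>(j:=h)) e \<in> {0<..<1}"
proof (cases "j = e")
  case True
  have "\<forall>\<^sub>F h in nhds (\<theta> j). h \<in> {0<..<1::real}"
    unfolding eventually_nhds using assms True by (intro exI[of _ "{0<..<1}"]) auto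
  thus ?thesis using True by simp
next
  case False thus ?thesis using assms by simp
qed

lemma Qn_eq: "\<theta> (p+q+1) \<in> {0<..<1} \<Longrightarrow> Q_n p q X n \<theta> \<omega> = QG p q X n \<theta> \<omega>"
  by (simp add: Q_n_def QG_def eps_tilde_def epsG_def gamma_eq)

lemma partial1:
  assumes "\<theta> (p+q+1) \<in> {0<..<1}"
  shows "partial j (\<lambda>\<theta>. Q_n p q X n \<theta> \<omega>) \<theta> = D1 p q X n j \<theta> \<omega>"
proof -
  have "deriv (\<lambda>h. Q_n p q X n (\<theta>(j:=h)) \<omega>) (\<theta> j) = deriv (\<lambda>h. QG p q X n (\<theta>(j:=h)) \<omega>) (\<theta> j)"
    by (rule deriv_cong_ev[OF eventually_mono[OF dom_ev[where e = "p+q+1" and \<theta> = \<theta> and j = j, OF assms]]]) (auto simp: Qn_eq)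
  also have "\<dots> = D1 p q X n j \<theta> \<omega>" by (rule DERIV_imp_deriv[OF deriv_QG])
  finally show ?thesis by (simp add: partial_def)
qed

lemma partial2:
  assumes "\<theta> (p+q+1) \<in> {0<..<1}"
  shows "partial a (partial b (\<lambda>\<theta>. Q_n p q X n \<theta> \<omega>)) \<theta> = D2 p q X n a b \<theta> \<omega>"
proof -
  have "deriv (\<lambda>h. partial b (\<lambda>\<theta>. Q_n p q X n \<theta> \<omega>) (\<theta>(a:=h))) (\<theta> a) = deriv (\<lambda>h. D1 p q X n b (\<theta>(a:=h)) \<omega>) (\<theta> a)"
    by (rule deriv_cong_ev[OF eventually_mono[OF dom_ev[where e = "p+q+1" and \<theta> = \<theta> and j = a, OF assms]]]) (auto simp: partial1)
  also have "\<dots> = D2 p q X n a b \<theta> \<omega>" by (rule DERIV_imp_deriv[OF deriv_D1])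
  finally show ?thesis by (simp add: partial_def)
qed


lemma abs_sum_bound:
  fixes c W x :: "nat \<Rightarrow> real" and K :: real
  assumes "finite A" "K \<ge> 0" "\<And>s. s \<in> A \<Longrightarrow> \<bar>c s\<bar> \<le> W s * K"
  shows "\<bar>\<Sum>s\<in>A. c s * x s\<bar> \<le> K * (\<Sum>s\<in>A. W s * \<bar>x s\<bar>)"
proof -
  have "\<bar>\<Sum>s\<in>A. c s * x s\<bar> \<le> (\<Sum>s\<in>A. \<bar>c s * x s\<bar>)" by (rule sum_abs)
  also have "\<dots> \<le> (\<Sum>s\<in>A. K * (W s * \<bar>x s\<bar>))"
  proof (rule sum_mono)
    fix s assume "s \<in> A"
    hence "\<bar>c s\<bar> * \<bar>x s\<bar> \<le> (W s * K) * \<bar>x s\<bar>" using assms(3) by (intro mult_right_mono) auto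
    thus "\<bar>c s * x s\<bar> \<le> K * (W s * \<bar>x s\<bar>)" by (simp add: abs_mult mult_ac)
  qed
  also have "\<dots> = K * (\<Sum>s\<in>A. W s * \<bar>x s\<bar>)" by (simp add: sum_distrib_left)
  finally show ?thesis .
qed

lemma lip_pair:
  fixes a1 a2 b1 b2 W x :: "nat \<Rightarrow> real"
  assumes "finite A" "N \<ge> 0"
    and "\<And>s. s \<in> A \<Longrightarrow> \<bar>a1 s\<bar> \<le> W s" "\<And>s. s \<in> A \<Longrightarrow> \<bar>a2 s\<bar> \<le> W s"
    and "\<And>s. s \<in> A \<Longrightarrow> \<bar>b1 s\<bar> \<le> W s" "\<And>s. s \<in> A \<Longrightarrow> \<bar>b2 s\<bar> \<le> W s"
    and "\<And>s. s \<in> A \<Longrightarrow> \<bar>a1 s - a2 s\<bar> \<le> W s * N" "\<And>s. s \<in> A \<Longrightarrow> \<bar>b1 s - b2 s\<bar> \<le> W s * N"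
  shows "\<bar>(\<Sum>s\<in>A. a1 s * x s) * (\<Sum>s\<in>A. b1 s * x s) - (\<Sum>s\<in>A. a2 s * x s) * (\<Sum>s\<in>A. b2 s * x s)\<bar>
         \<le> 2 * N * (\<Sum>s\<in>A. W s * \<bar>x s\<bar>)\<^sup>2"
proof -
  define S where "S = (\<Sum>s\<in>A. W s * \<bar>x s\<bar>)"
  have S0: "S \<ge> 0" unfolding S_def using assms(3)
    by (intro sum_nonneg mult_nonneg_nonneg) (auto intro: order_trans[OF abs_ge_zero])
  have bd: "\<bar>\<Sum>s\<in>A. c s * x s\<bar> \<le> S" if "\<And>s. s \<in> A \<Longrightarrow> \<bar>c s\<bar> \<le> W s" for c
    using abs_sum_bound[OF assms(1), of 1 c W x] that by (simp add: S_def)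
  define A1 where "A1 = (\<Sum>s\<in>A. a1 s * x s)"
  define A2 where "A2 = (\<Sum>s\<in>A. a2 s * x s)"
  define B1 where "B1 = (\<Sum>s\<in>A. b1 s * x s)"
  define B2 where "B2 = (\<Sum>s\<in>A. b2 s * x s)"
  have hA2: "\<bar>A2\<bar> \<le> S" unfolding A2_def by (rule bd) (rule assms(4))
  have hB1: "\<bar>B1\<bar> \<le> S" unfolding B1_def by (rule bd) (rule assms(5))
  have dA: "\<bar>A1 - A2\<bar> \<le> N * S"
  proof -
    have "A1 - A2 = (\<Sum>s\<in>A. (a1 s - a2 s) * x s)" by (simp add: A1_def A2_def sum_subtractf algebra_simps)
    thus ?thesis using abs_sum_bound[OF assms(1,2), of "\<lambda>s. a1 s - a2 s" W x] assms(7) by (simp add: S_def)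
  qed
  have dB: "\<bar>B1 - B2\<bar> \<le> N * S"
  proof -
    have "B1 - B2 = (\<Sum>s\<in>A. (b1 s - b2 s) * x s)" by (simp add: B1_def B2_def sum_subtractf algebra_simps)
    thus ?thesis using abs_sum_bound[OF assms(1,2), of "\<lambda>s. b1 s - b2 s" W x] assms(8) by (simp add: S_def)
  qed
  have "A1 * B1 - A2 * B2 = (A1 - A2) * B1 + A2 * (B1 - B2)" by (simp add: algebra_simps)
  hence "\<bar>A1 * B1 - A2 * B2\<bar> \<le> \<bar>A1 - A2\<bar> * \<bar>B1\<bar> + \<bar>A2\<bar> * \<bar>B1 - B2\<bar>"
    by (simp add: abs_mult[symmetric] abs_triangle_ineq)
  also have "\<dots> \<le> (N * S) * S + S * (N * S)"
    using dA dB hA2 hB1 S0 assms(2) by (intro add_mono mult_mono) auto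
  finally show ?thesis by (simp add: A1_def A2_def B1_def B2_def S_def power2_eq_square algebra_simps)
qed

lemma cs_weighted:
  fixes w x :: "nat \<Rightarrow> real"
  assumes "\<And>s. 0 \<le> w s"
  shows "(\<Sum>s\<in>A. w s * \<bar>x s\<bar>)\<^sup>2 \<le> (\<Sum>s\<in>A. w s) * (\<Sum>s\<in>A. w s * (x s)\<^sup>2)"
proof -
  have "(\<Sum>s\<in>A. sqrt (w s) * (sqrt (w s) * \<bar>x s\<bar>))\<^sup>2 \<le> (\<Sum>s\<in>A. (sqrt (w s))\<^sup>2) * (\<Sum>s\<in>A. (sqrt (w s) * \<bar>x s\<bar>)\<^sup>2)"
    by (rule Cauchy_Schwarz_ineq_sum)
  moreover have "sqrt (w s) * (sqrt (w s) * \<bar>x s\<bar>) = w s * \<bar>x s\<bar>" for s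
    using assms[of s] by (simp add: mult.assoc[symmetric])
  moreover have "(sqrt (w s))\<^sup>2 = w s" for s using assms[of s] by simp
  moreover have "(sqrt (w s) * \<bar>x s\<bar>)\<^sup>2 = w s * (x s)\<^sup>2" for s
    using assms[of s] by (simp add: power_mult_distrib)
  ultimately show ?thesis by simp
qed


lemma scale_le: "\<bar>z\<bar> \<le> B \<Longrightarrow> \<bar>(1 / real n) * z\<bar> \<le> (1 / real n) * (B::real)"
  by (simp add: abs_mult divide_right_mono)

lemma D2_lip:
  fixes W :: "nat \<Rightarrow> real" and X :: "int \<Rightarrow> 'w \<Rightarrow> real"
  assumes W0: "\<And>s. 0 \<le> W s" and Wt: "\<And>m. (\<Sum>s<m. W s) \<le> Wt"
  and bd: "\<And>\<theta> s. \<theta> \<in> T \<Longrightarrow> \<bar>gam p q \<theta> $ s\<bar> \<le> W s \<and> \<bar>G1 p q a \<theta> $ s\<bar> \<le> W s \<and> \<bar>G1 p q b \<theta> $ s\<bar> \<le> W s \<and> \<bar>G2 p q a b \<theta> $ s\<bar> \<le> W s"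
  and lp: "\<And>\<theta>1 \<theta>2 s. \<theta>1 \<in> T \<Longrightarrow> \<theta>2 \<in> T \<Longrightarrow>
       \<bar>gam p q \<theta>1 $ s - gam p q \<theta>2 $ s\<bar> \<le> W s * N \<theta>1 \<theta>2 \<and>
       \<bar>G1 p q a \<theta>1 $ s - G1 p q a \<theta>2 $ s\<bar> \<le> W s * N \<theta>1 \<theta>2 \<and>
       \<bar>G1 p q b \<theta>1 $ s - G1 p q b \<theta>2 $ s\<bar> \<le> W s * N \<theta>1 \<theta>2 \<and>
       \<bar>G2 p q a b \<theta>1 $ s - G2 p q a b \<theta>2 $ s\<bar> \<le> W s * N \<theta>1 \<theta>2"
  and t: "\<theta>1 \<in> T" "\<theta>2 \<in> T" and N0: "N \<theta>1 \<theta>2 \<ge> 0"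
  shows "\<bar>D2 p q X n a b \<theta>1 \<omega> - D2 p q X n a b \<theta>2 \<omega>\<bar>
     \<le> 8 * Wt / real n * (\<Sum>t=1..n. \<Sum>s=0..<t. W s * (X (int t - int s) \<omega>)\<^sup>2) * N \<theta>1 \<theta>2"
proof -
  define c where "c = N \<theta>1 \<theta>2"
  define x where "x = (\<lambda>t s. X (int t - int s) \<omega>)"
  define S where "S = (\<lambda>t. \<Sum>s=0..<t. W s * \<bar>x t s\<bar>)"
  define Y where "Y = (\<lambda>t. \<Sum>s=0..<t. W s * (x t s)\<^sup>2)"
  have Y0: "Y t \<ge> 0" for t unfolding Y_def using W0 by (intro sum_nonneg mult_nonneg_nonneg) auto
  note bg = conjunct1[OF bd]
  note bA = conjunct1[OF conjunct2[OF bd]]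
  note bB = conjunct1[OF conjunct2[OF conjunct2[OF bd]]]
  note bC = conjunct2[OF conjunct2[OF conjunct2[OF bd]]]
  note lg = conjunct1[OF lp[OF t]]
  note lA = conjunct1[OF conjunct2[OF lp[OF t]]]
  note lB = conjunct1[OF conjunct2[OF conjunct2[OF lp[OF t]]]]
  note lC = conjunct2[OF conjunct2[OF conjunct2[OF lp[OF t]]]]
  have h1: "\<bar>E1 p q X a \<theta>1 t \<omega> * E1 p q X b \<theta>1 t \<omega> - E1 p q X a \<theta>2 t \<omega> * E1 p q X b \<theta>2 t \<omega>\<bar> \<le> 2 * c * (S t)\<^sup>2" for t
  proof -
    have "\<bar>(\<Sum>s=0..<t. G1 p q a \<theta>1 $ s * x t s) * (\<Sum>s=0..<t. G1 p q b \<theta>1 $ s * x t s)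
        - (\<Sum>s=0..<t. G1 p q a \<theta>2 $ s * x t s) * (\<Sum>s=0..<t. G1 p q b \<theta>2 $ s * x t s)\<bar>
        \<le> 2 * c * (\<Sum>s=0..<t. W s * \<bar>x t s\<bar>)\<^sup>2"
      apply (rule lip_pair[where x = "x t" and N = c and W = W])
      apply simp
      apply (simp add: c_def N0)
      apply (rule bA[OF t(1)])
      apply (rule bA[OF t(2)])
      apply (rule bB[OF t(1)])
      apply (rule bB[OF t(2)])
      apply (unfold c_def, rule lA)
      apply (rule lB)
      done
    thus ?thesis unfolding E1_def S_def x_def .
  qed
  have h2: "\<bar>epsG p q X \<theta>1 t \<omega> * E2 p q X a b \<theta>1 t \<omega> - epsG p q X \<theta>2 t \<omega> * E2 p q X a b \<theta>2 t \<omega>\<bar> \<le> 2 * c * (S t)\<^sup>2" for t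
  proof -
    have "\<bar>(\<Sum>s=0..<t. gam p q \<theta>1 $ s * x t s) * (\<Sum>s=0..<t. G2 p q a b \<theta>1 $ s * x t s)
        - (\<Sum>s=0..<t. gam p q \<theta>2 $ s * x t s) * (\<Sum>s=0..<t. G2 p q a b \<theta>2 $ s * x t s)\<bar>
        \<le> 2 * c * (\<Sum>s=0..<t. W s * \<bar>x t s\<bar>)\<^sup>2"
      apply (rule lip_pair[where x = "x t" and N = c and W = W])
      apply simp
      apply (simp add: c_def N0)
      apply (rule bg[OF t(1)])
      apply (rule bg[OF t(2)])
      apply (rule bC[OF t(1)])
      apply (rule bC[OF t(2)])
      apply (unfold c_def, rule lg)
      apply (rule lC)
      done
    thus ?thesis unfolding epsG_def E2_def S_def x_def .
  qed
  have h3: "(S t)\<^sup>2 \<le> Wt * Y t" for t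
  proof -
    have "(S t)\<^sup>2 \<le> (\<Sum>s=0..<t. W s) * Y t" unfolding S_def Y_def by (rule cs_weighted[OF W0])
    also have "\<dots> \<le> Wt * Y t" using Wt[of t] Y0[of t] by (intro mult_right_mono) (auto simp: atLeast0LessThan)
    finally show ?thesis .
  qed
  have eqD: "D2 p q X n a b \<theta>1 \<omega> - D2 p q X n a b \<theta>2 \<omega> = (1 / real n) * (\<Sum>t=1..n. 2 *
      ((E1 p q X a \<theta>1 t \<omega> * E1 p q X b \<theta>1 t \<omega> - E1 p q X a \<theta>2 t \<omega> * E1 p q X b \<theta>2 t \<omega>)
      + (epsG p q X \<theta>1 t \<omega> * E2 p q X a b \<theta>1 t \<omega> - epsG p q X \<theta>2 t \<omega> * E2 p q X a b \<theta>2 t \<omega>)))"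
  proof -
    have "D2 p q X n a b \<theta>1 \<omega> - D2 p q X n a b \<theta>2 \<omega> = (1 / real n) * (\<Sum>t=1..n.
       2 * (E1 p q X a \<theta>1 t \<omega> * E1 p q X b \<theta>1 t \<omega> + epsG p q X \<theta>1 t \<omega> * E2 p q X a b \<theta>1 t \<omega>)
     - 2 * (E1 p q X a \<theta>2 t \<omega> * E1 p q X b \<theta>2 t \<omega> + epsG p q X \<theta>2 t \<omega> * E2 p q X a b \<theta>2 t \<omega>))"
      unfolding D2_def sum_subtractf right_diff_distrib ..
    also have "\<dots> = (1 / real n) * (\<Sum>t=1..n. 2 *
      ((E1 p q X a \<theta>1 t \<omega> * E1 p q X b \<theta>1 t \<omega> - E1 p q X a \<theta>2 t \<omega> * E1 p q X b \<theta>2 t \<omega>)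
      + (epsG p q X \<theta>1 t \<omega> * E2 p q X a b \<theta>1 t \<omega> - epsG p q X \<theta>2 t \<omega> * E2 p q X a b \<theta>2 t \<omega>)))"
      by (intro arg_cong[where f = "\<lambda>z. (1 / real n) * z"] sum.cong refl) (simp add: algebra_simps)
    finally show ?thesis .
  qed
  hence "\<bar>D2 p q X n a b \<theta>1 \<omega> - D2 p q X n a b \<theta>2 \<omega>\<bar> = \<bar>(1 / real n) * (\<Sum>t=1..n. 2 *
      ((E1 p q X a \<theta>1 t \<omega> * E1 p q X b \<theta>1 t \<omega> - E1 p q X a \<theta>2 t \<omega> * E1 p q X b \<theta>2 t \<omega>)
      + (epsG p q X \<theta>1 t \<omega> * E2 p q X a b \<theta>1 t \<omega> - epsG p q X \<theta>2 t \<omega> * E2 p q X a b \<theta>2 t \<omega>)))\<bar>" by (simp only:)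
  also have "\<dots> \<le> (1 / real n) * (\<Sum>t=1..n. 8 * c * Wt * Y t)"
  proof -
    have "\<bar>\<Sum>t=1..n. 2 *
      ((E1 p q X a \<theta>1 t \<omega> * E1 p q X b \<theta>1 t \<omega> - E1 p q X a \<theta>2 t \<omega> * E1 p q X b \<theta>2 t \<omega>)
      + (epsG p q X \<theta>1 t \<omega> * E2 p q X a b \<theta>1 t \<omega> - epsG p q X \<theta>2 t \<omega> * E2 p q X a b \<theta>2 t \<omega>))\<bar>
      \<le> (\<Sum>t=1..n. 8 * c * Wt * Y t)"
    proof (rule order_trans[OF sum_abs], rule sum_mono)
      fix t
      have "c \<ge> 0" using N0 by (simp add: c_def)
      hence "2 * c * (S t)\<^sup>2 \<le> 2 * c * (Wt * Y t)" using h3[of t] by (intro mult_left_mono) auto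
      thus "\<bar>2 * ((E1 p q X a \<theta>1 t \<omega> * E1 p q X b \<theta>1 t \<omega> - E1 p q X a \<theta>2 t \<omega> * E1 p q X b \<theta>2 t \<omega>)
      + (epsG p q X \<theta>1 t \<omega> * E2 p q X a b \<theta>1 t \<omega> - epsG p q X \<theta>2 t \<omega> * E2 p q X a b \<theta>2 t \<omega>))\<bar> \<le> 8 * c * Wt * Y t"
        using h1[of t] h2[of t] by (simp add: abs_mult)
    qed
    thus ?thesis by (rule scale_le)
  qed
  also have "\<dots> = 8 * Wt / real n * (\<Sum>t=1..n. Y t) * c"
  proof -
    have "(\<Sum>t=1..n. 8 * c * Wt * Y t) = (8 * c * Wt) * (\<Sum>t=1..n. Y t)" by (simp add: sum_distrib_left)
    thus ?thesis by simp
  qed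
  finally show ?thesis by (simp only: Y_def x_def c_def)
qed


lemma prob_part:
  fixes M :: "'w measure" and X :: "int \<Rightarrow> 'w \<Rightarrow> real" and W :: "nat \<Rightarrow> real"
  assumes M: "prob_space M" and Xm: "\<And>t. X t \<in> borel_measurable M"
    and XL2: "\<And>t. integrable M (\<lambda>\<omega>. (X t \<omega>)\<^sup>2)"
    and X2: "\<And>t. integral\<^sup>L M (\<lambda>\<omega>. (X t \<omega>)\<^sup>2) = m"
    and W0: "\<And>s. 0 \<le> W s" and Wt: "\<And>k. (\<Sum>s<k. W s) \<le> Wt"
  defines "\<Delta> \<equiv> (\<lambda>n \<omega>. 8 * Wt / real n * (\<Sum>t=1..n. \<Sum>s=0..<t. W s * (X (int t - int s) \<omega>)\<^sup>2))"
  shows "(\<forall>n. \<Delta> n \<in> borel_measurable M) \<and> bounded_in_probability M \<Delta>"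
proof -
  interpret prob_space M by (rule M)
  have Wt0: "0 \<le> Wt" using Wt[of 0] by simp
  have "0 \<le> integral\<^sup>L M (\<lambda>\<omega>. (X 0 \<omega>)\<^sup>2)" by simp
  hence m0: "0 \<le> m" using X2[of 0] by simp
  note [measurable] = Xm
  have meas: "\<Delta> n \<in> borel_measurable M" for n unfolding \<Delta>_def by measurable
  have int: "integrable M (\<Delta> n)" for n
  proof -
    have intS: "integrable M (\<lambda>\<omega>. \<Sum>t=1..n. \<Sum>s=0..<t. W s * (X (int t - int s) \<omega>)\<^sup>2)"
      by (intro Bochner_Integration.integrable_sum Bochner_Integration.integrable_mult_right XL2)
    have "integrable M (\<lambda>\<omega>. (8 * Wt / real n) * (\<Sum>t=1..n. \<Sum>s=0..<t. W s * (X (int t - int s) \<omega>)\<^sup>2))"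
      by (rule Bochner_Integration.integrable_mult_right) (rule intS)
    thus ?thesis by (simp only: \<Delta>_def)
  qed
  have nonneg: "0 \<le> \<Delta> n \<omega>" for n \<omega>
  proof -
    have "0 \<le> (\<Sum>t=1..n. \<Sum>s=0..<t. W s * (X (int t - int s) \<omega>)\<^sup>2)"
      by (intro sum_nonneg) (simp add: W0)
    moreover have "0 \<le> 8 * Wt / real n" using Wt0 by simp
    ultimately show ?thesis unfolding \<Delta>_def by (rule mult_nonneg_nonneg[rotated])
  qed
  have EI: "integral\<^sup>L M (\<Delta> n) \<le> 8 * Wt\<^sup>2 * m" if "n \<ge> 1" for n
  proof -
    have "integral\<^sup>L M (\<Delta> n) = 8 * Wt / real n * (\<Sum>t=1..n. \<Sum>s=0..<t. W s * m)"
    proof -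
      have i1: "integral\<^sup>L M (\<lambda>\<omega>. \<Sum>s=0..<t. W s * (X (int t - int s) \<omega>)\<^sup>2) = (\<Sum>s=0..<t. W s * m)" for t
        by (subst Bochner_Integration.integral_sum) (auto simp: X2 XL2)
      have iS: "integrable M (\<lambda>\<omega>. \<Sum>s=0..<t. W s * (X (int t - int s) \<omega>)\<^sup>2)" for t
        by (intro Bochner_Integration.integrable_sum Bochner_Integration.integrable_mult_right XL2)
      have "integral\<^sup>L M (\<lambda>\<omega>. \<Sum>t=1..n. \<Sum>s=0..<t. W s * (X (int t - int s) \<omega>)\<^sup>2) = (\<Sum>t=1..n. \<Sum>s=0..<t. W s * m)"
        by (subst Bochner_Integration.integral_sum) (auto simp: i1 iS)
      thus ?thesis unfolding \<Delta>_def by (simp only: integral_mult_right_zero)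
    qed
    also have "(\<Sum>t=1..n. \<Sum>s=0..<t. W s * m) \<le> (\<Sum>t=1..n. Wt * m)"
    proof (rule sum_mono)
      fix t
      have "(\<Sum>s=0..<t. W s * m) = (\<Sum>s<t. W s) * m" by (simp add: sum_distrib_right atLeast0LessThan)
      also have "\<dots> \<le> Wt * m" using Wt[of t] m0 by (rule mult_right_mono)
      finally show "(\<Sum>s=0..<t. W s * m) \<le> Wt * m" .
    qed
    hence "8 * Wt / real n * (\<Sum>t=1..n. \<Sum>s=0..<t. W s * m) \<le> 8 * Wt / real n * (\<Sum>t=1..n. Wt * m)"
      using Wt0 by (intro mult_left_mono) auto
    also have "\<dots> = 8 * Wt\<^sup>2 * m" using that by (simp add: power2_eq_square)
    finally show ?thesis .
  qed
  have bip: "bounded_in_probability M \<Delta>"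
    unfolding bounded_in_probability_def
  proof (intro allI impI)
    fix e :: real assume e: "e > 0"
    define K where "K = 8 * Wt\<^sup>2 * m / e + 1"
    have "0 \<le> 8 * Wt\<^sup>2 * m / e" using e m0 by (intro divide_nonneg_pos mult_nonneg_nonneg) auto
    hence K0: "K > 0" by (simp add: K_def)
    show "\<exists>K. \<forall>n\<ge>1. measure M {\<omega> \<in> space M. K < \<bar>\<Delta> n \<omega>\<bar>} < e"
    proof (intro exI allI impI)
      fix n :: nat assume n: "n \<ge> 1"
      have "measure M {\<omega> \<in> space M. K < \<bar>\<Delta> n \<omega>\<bar>} \<le> measure M {\<omega> \<in> space M. \<Delta> n \<omega> \<ge> K}"
        using nonneg meas by (intro finite_measure_mono) auto
      also have "\<dots> \<le> integral\<^sup>L M (\<Delta> n) / K"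
        by (rule integral_Markov_inequality_measure[OF int _ _ K0, where A = "space M"]) (auto simp: nonneg)
      also have "\<dots> \<le> 8 * Wt\<^sup>2 * m / K" using EI[OF n] K0 by (intro divide_right_mono) auto
      also have "\<dots> < e"
      proof -
        have "8 * Wt\<^sup>2 * m < e * K" using e by (simp add: K_def field_simps)
        thus ?thesis using K0 by (simp add: divide_less_eq mult.commute)
      qed
      finally show "measure M {\<omega> \<in> space M. K < \<bar>\<Delta> n \<omega>\<bar>} < e" .
    qed
  qed
  show ?thesis using meas bip by blast
qed


lemma good_collect:
  assumes "finite I" "\<And>i. i \<in> I \<Longrightarrow> good T N (F i)" "\<And>\<theta>1 \<theta>2. \<theta>1 \<in> T \<Longrightarrow> \<theta>2 \<in> T \<Longrightarrow> N \<theta>1 \<theta>2 \<ge> 0"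
  shows "\<exists>U. SW U \<and> (\<forall>i\<in>I. \<forall>\<theta>\<in>T. \<forall>n. \<bar>F i \<theta> $ n\<bar> \<le> U n) \<and>
     (\<forall>i\<in>I. \<forall>\<theta>1\<in>T. \<forall>\<theta>2\<in>T. \<forall>n. \<bar>F i \<theta>1 $ n - F i \<theta>2 $ n\<bar> \<le> U n * N \<theta>1 \<theta>2)"
proof -
  have "\<forall>i\<in>I. \<exists>U. SW U \<and> (\<forall>\<theta>\<in>T. \<forall>n. \<bar>F i \<theta> $ n\<bar> \<le> U n) \<and>
      (\<forall>\<theta>1\<in>T. \<forall>\<theta>2\<in>T. \<forall>n. \<bar>F i \<theta>1 $ n - F i \<theta>2 $ n\<bar> \<le> U n * N \<theta>1 \<theta>2)"
    using assms(2) unfolding good_def by blast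
  then obtain Uf where Uf: "\<forall>i\<in>I. SW (Uf i) \<and> (\<forall>\<theta>\<in>T. \<forall>n. \<bar>F i \<theta> $ n\<bar> \<le> Uf i n) \<and>
      (\<forall>\<theta>1\<in>T. \<forall>\<theta>2\<in>T. \<forall>n. \<bar>F i \<theta>1 $ n - F i \<theta>2 $ n\<bar> \<le> Uf i n * N \<theta>1 \<theta>2)"
    by (metis (no_types, lifting) bchoice)
  define U where "U = (\<lambda>n. \<Sum>i\<in>I. Uf i n)"
  have SWU: "SW U" unfolding U_def using Uf assms(1) by (intro SW_sum) auto
  have le: "Uf i n \<le> U n" if "i \<in> I" for i n
    unfolding U_def using Uf that assms(1) by (intro member_le_sum) (auto simp: SW_def)
  show ?thesis
  proof (intro exI conjI ballI allI)
    show "SW U" by (rule SWU)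
  next
    fix i \<theta> n assume "i \<in> I" "\<theta> \<in> T"
    hence "\<bar>F i \<theta> $ n\<bar> \<le> Uf i n" using Uf by blast
    thus "\<bar>F i \<theta> $ n\<bar> \<le> U n" using le[OF \<open>i \<in> I\<close>, of n] by linarith
  next
    fix i \<theta>1 \<theta>2 n assume a: "i \<in> I" "\<theta>1 \<in> T" "\<theta>2 \<in> T"
    have "\<bar>F i \<theta>1 $ n - F i \<theta>2 $ n\<bar> \<le> Uf i n * N \<theta>1 \<theta>2" using Uf a by blast
    also have "\<dots> \<le> U n * N \<theta>1 \<theta>2" using le[OF a(1), of n] assms(3)[OF a(2,3)] by (rule mult_right_mono)
    finally show "\<bar>F i \<theta>1 $ n - F i \<theta>2 $ n\<bar> \<le> U n * N \<theta>1 \<theta>2" .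
  qed
qed

theorem proposition1:
  fixes M :: "'w measure" and X \<epsilon> :: "int \<Rightarrow> 'w \<Rightarrow> real"
    and a b :: "nat \<Rightarrow> real" and p q :: nat
    and d0 \<sigma>2 \<kappa> d1 d2 :: real
  assumes M: "prob_space M"
    and d0: "0 < d0" "d0 < 1/2"
    and eps_meas: "\<And>t. \<epsilon> t \<in> borel_measurable M"
    and eps_L2: "\<And>t. integrable M (\<lambda>\<omega>. (\<epsilon> t \<omega>)\<^sup>2)"
    and eps_mean: "\<And>t. integral\<^sup>L M (\<epsilon> t) = 0"
    and eps_var: "\<sigma>2 > 0" "\<And>t. integral\<^sup>L M (\<lambda>\<omega>. (\<epsilon> t \<omega>)\<^sup>2) = \<sigma>2"
    and eps_uncorr: "\<And>s t. s \<noteq> t \<Longrightarrow> integral\<^sup>L M (\<lambda>\<omega>. \<epsilon> s \<omega> * \<epsilon> t \<omega>) = 0"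
    and X_meas: "\<And>t. X t \<in> borel_measurable M"
    and X_L2: "\<And>t. integrable M (\<lambda>\<omega>. (X t \<omega>)\<^sup>2)"
    and X_mean_stat: "\<And>s t. integral\<^sup>L M (X s) = integral\<^sup>L M (X t)"
    and X_cov_stat: "\<And>s t h. integral\<^sup>L M (\<lambda>\<omega>. X (s + h) \<omega> * X s \<omega>)
                             = integral\<^sup>L M (\<lambda>\<omega>. X (t + h) \<omega> * X t \<omega>)"
    and a_roots: "\<And>z. cmod z \<le> 1 \<Longrightarrow> lag_poly p a z \<noteq> 0"
    and b_roots: "\<And>z. cmod z \<le> 1 \<Longrightarrow> lag_poly q b z \<noteq> 0"
    and no_common: "\<And>z. \<not> (lag_poly p a z = 0 \<and> lag_poly q b z = 0)"
    and farima: "\<And>t. AE \<omega> in M.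
         (\<forall>k. summable (\<lambda>j. frac_alpha j d0 * X (t - int k - int j) \<omega>)) \<and>
         frac_diff d0 X t \<omega> - (\<Sum>i=1..p. a i * frac_diff d0 X (t - int i) \<omega>)
           = \<epsilon> t \<omega> - (\<Sum>j=1..q. b j * \<epsilon> (t - int j) \<omega>)"
    and \<kappa>: "\<kappa> > 0"
    and d12: "0 < d1" "d1 \<le> d2" "d2 < 1/2"
  shows "\<exists>\<Delta> :: nat \<Rightarrow> 'w \<Rightarrow> real.
           (\<forall>n. \<Delta> n \<in> borel_measurable M) \<and>
           bounded_in_probability M \<Delta> \<and>
           (\<forall>n\<ge>1. \<forall>\<omega>\<in>space M. \<forall>i\<in>{1..p+q+1}. \<forall>j\<in>{1..p+q+1}.
              \<forall>\<theta>1\<in>Theta_kappa p q \<kappa> d1 d2. \<forall>\<theta>2\<in>Theta_kappa p q \<kappa> d1 d2.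
                \<bar>partial i (partial j (\<lambda>\<theta>. Q_n p q X n \<theta> \<omega>)) \<theta>1
                 - partial i (partial j (\<lambda>\<theta>. Q_n p q X n \<theta> \<omega>)) \<theta>2\<bar>
                \<le> \<Delta> n \<omega> * param_norm (p + q + 1) (\<lambda>k. \<theta>1 k - \<theta>2 k))"
proof -
  define T where "T = Theta_kappa p q \<kappa> d1 d2"
  define R where "R = {1..p+q+1}"
  define F where "F = (\<lambda>(k::nat, a'::nat, b'::nat). if k = 0 then gam p q else if k = 1 then G1 p q b' else G2 p q a' b')"
  define I where "I = {0::nat, 1, 2} \<times> R \<times> R"
  have d2: "d2 \<le> 1/2" using d12 by simp
  have goodF: "good T (NN p q) (F i)" if "i \<in> I" for i
    using good_all[OF \<kappa> d12(1) d2] unfolding T_def F_def by (auto split: prod.splits)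
  obtain W where W: "SW W" "\<forall>i\<in>I. \<forall>\<theta>\<in>T. \<forall>n. \<bar>F i \<theta> $ n\<bar> \<le> W n"
     "\<forall>i\<in>I. \<forall>\<theta>1\<in>T. \<forall>\<theta>2\<in>T. \<forall>n. \<bar>F i \<theta>1 $ n - F i \<theta>2 $ n\<bar> \<le> W n * NN p q \<theta>1 \<theta>2"
    using good_collect[of I T "NN p q" F] goodF NN_nonneg unfolding I_def R_def by auto
  have W0: "\<And>s. 0 \<le> W s" using W(1) by (simp add: SW_def)
  define Wt where "Wt = suminf W"
  have Wt: "(\<Sum>s<k. W s) \<le> Wt" for k
    unfolding Wt_def using W(1) by (intro sum_le_suminf) (auto simp: SW_def)
  define m where "m = integral\<^sup>L M (\<lambda>\<omega>. (X 0 \<omega>)\<^sup>2)"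
  have X2: "integral\<^sup>L M (\<lambda>\<omega>. (X t \<omega>)\<^sup>2) = m" for t
    using X_cov_stat[of t 0 0] by (simp add: m_def power2_eq_square)
  define \<Delta> where "\<Delta> = (\<lambda>n \<omega>. 8 * Wt / real n * (\<Sum>t=1..n. \<Sum>s=0..<t. W s * (X (int t - int s) \<omega>)\<^sup>2))"
  have P: "(\<forall>n. \<Delta> n \<in> borel_measurable M) \<and> bounded_in_probability M \<Delta>"
    unfolding \<Delta>_def by (rule prob_part[OF M X_meas X_L2 X2 W0 Wt])
  have main: "\<bar>partial i (partial j (\<lambda>\<theta>. Q_n p q X n \<theta> \<omega>)) \<theta>1
                 - partial i (partial j (\<lambda>\<theta>. Q_n p q X n \<theta> \<omega>)) \<theta>2\<bar>
                \<le> \<Delta> n \<omega> * param_norm (p + q + 1) (\<lambda>k. \<theta>1 k - \<theta>2 k)"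
    if ij: "i \<in> R" "j \<in> R" and t: "\<theta>1 \<in> T" "\<theta>2 \<in> T" for n \<omega> i j \<theta>1 \<theta>2
  proof -
    have dom: "\<theta> (p+q+1) \<in> {0<..<1}" if "\<theta> \<in> T" for \<theta>
      using that d12 by (auto simp: T_def Theta_kappa_def)
    have i0: "(0, i, j) \<in> I" "(1, i, i) \<in> I" "(1, i, j) \<in> I" "(2, i, j) \<in> I" using ij by (auto simp: I_def)
    have "\<bar>D2 p q X n i j \<theta>1 \<omega> - D2 p q X n i j \<theta>2 \<omega>\<bar> \<le> \<Delta> n \<omega> * NN p q \<theta>1 \<theta>2"
      unfolding \<Delta>_def
    proof (rule D2_lip[OF W0 Wt _ _ t NN_nonneg])
      fix \<theta> s assume "\<theta> \<in> T"
      thus "\<bar>gam p q \<theta> $ s\<bar> \<le> W s \<and> \<bar>G1 p q i \<theta> $ s\<bar> \<le> W s \<and> \<bar>G1 p q j \<theta> $ s\<bar> \<le> W s \<and> \<bar>G2 p q i j \<theta> $ s\<bar> \<le> W s"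
        using W(2) i0 unfolding F_def by fastforce
    next
      fix \<theta>1 \<theta>2 s assume "\<theta>1 \<in> T" "\<theta>2 \<in> T"
      thus "\<bar>gam p q \<theta>1 $ s - gam p q \<theta>2 $ s\<bar> \<le> W s * NN p q \<theta>1 \<theta>2 \<and>
       \<bar>G1 p q i \<theta>1 $ s - G1 p q i \<theta>2 $ s\<bar> \<le> W s * NN p q \<theta>1 \<theta>2 \<and>
       \<bar>G1 p q j \<theta>1 $ s - G1 p q j \<theta>2 $ s\<bar> \<le> W s * NN p q \<theta>1 \<theta>2 \<and>
       \<bar>G2 p q i j \<theta>1 $ s - G2 p q i j \<theta>2 $ s\<bar> \<le> W s * NN p q \<theta>1 \<theta>2"
        using W(3) i0 unfolding F_def by fastforce
    qed
    thus ?thesis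
      using partial2[where p = p and q = q and a = i and b = j and X = X and n = n and \<omega> = \<omega> and \<theta> = \<theta>1, OF dom[OF t(1)]]
        partial2[where p = p and q = q and a = i and b = j and X = X and n = n and \<omega> = \<omega> and \<theta> = \<theta>2, OF dom[OF t(2)]]
      by simp
  qed
  show ?thesis
    by (rule exI[of _ \<Delta>]) (use P main in \<open>auto simp: R_def T_def\<close>)
qed

end
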